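(* For every $\omega\ge6$, the Swirl Network with source dimension $\omega$ is scalar linearly solvable over $\mathrm{GF}(5)$ and over $\mathrm{GF}(7)$, but does not have a vector linear solution over $\mathrm{GF}(2)^L$ for any $L\in\{1,2,3\}$.
   Context: A multicast network is a finite directed acyclic multigraph with a unique source $s$ and a set of receivers; edges have unit capacity; $In(v)$, $Out(v)$ are incoming/outgoing edges of $v$; $\omega=|Out(s)|$ is the source dimension. A vector linear code over $\mathrm{GF}(q)^L$ assigns to each pair $(d,e)$ of edges an $L\times L$ matrix $\mathbf{K}_{d,e}$ over $\mathrm{GF}(q)$, zero unless $d\in In(v)$, $e\in Out(v)$ for some $v$; global encoding kernels ($\omega L\times L$) satisfy $[\mathbf{F}_e]_{e\in Out(s)}=\mathbf{I}_{\omega L}$ and $\mathbf{F}_e=\sum_{d\in In(v)}\mathbf{F}_d\mathbf{K}_{d,e}$ for $e\in Out(v)$, $v\neq s$; it is a solution if $[\mathbf{F}_e]_{e\in In(t)}$ has rank $\omega L$ for every receiver $t$. Scalar linear solutions over $\mathrm{GF}(Q)$ are the dimension-$1$ case. The Swirl Network with source dimension $\omega$ has source $s$; nodes $u_1,\dots,u_\omega$ each with one edge from $s$; nodes $v_1,\dots,v_\omega$, where $v_j$ has one incoming edge from $u_j$ and one from $u_{j+1}$ ($u_{\omega+1}=u_1$); each $v_j$ has $2$ outgoing edges, each to a distinct layer-4 node (each layer-4 node has exactly one incoming edge); and for every set $N$ of $\omega$ layer-4 nodes such that there are $\omega$ edge-disjoint paths from $s$ ending at nodes of $N$, a receiver with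 one incoming edge from each node of $N$. *)

theory Defs
  imports "Jordan_Normal_Form.DL_Rank"
begin

definition In_edges :: "'e set \<Rightarrow> ('e \<Rightarrow> 'v) \<Rightarrow> 'v \<Rightarrow> 'e set" where
  "In_edges E head v = {e \<in> E. head e = v}"

definition Out_edges :: "'e set \<Rightarrow> ('e \<Rightarrow> 'v) \<Rightarrow> 'v \<Rightarrow> 'e set" where
  "Out_edges E tail v = {e \<in> E. tail e = v}"

definition block_concat :: "nat \<Rightarrow> ('e \<Rightarrow> 'a mat) \<Rightarrow> 'e list \<Rightarrow> 'a mat" where
  "block_concat n F es = mat_of_cols n (concat (map (\<lambda>e. cols (F e)) es))"

definition is_vector_linear_solution ::
  "'e set \<Rightarrow> ('e \<Rightarrow> 'v) \<Rightarrow> ('e \<Rightarrow> 'v) \<Rightarrow> 'v \<Rightarrow> 'v set \<Rightarrow> nat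
    \<Rightarrow> ('e \<Rightarrow> 'e \<Rightarrow> 'a::field mat) \<Rightarrow> ('e \<Rightarrow> 'a mat) \<Rightarrow> bool" where
  "is_vector_linear_solution E tail head s Rcv L K F \<longleftrightarrow>
     (let \<omega> = card (Out_edges E tail s) in
       (\<forall>d\<in>E. \<forall>e\<in>E. K d e \<in> carrier_mat L L \<and> (head d \<noteq> tail e \<longrightarrow> K d e = 0\<^sub>m L L)) \<and>
       (\<forall>e\<in>E. F e \<in> carrier_mat (\<omega> * L) L) \<and>
       (\<exists>srcs. distinct srcs \<and> set srcs = Out_edges E tail s \<and>
           block_concat (\<omega> * L) F srcs = 1\<^sub>m (\<omega> * L)) \<and>
       (\<forall>e\<in>E. tail e \<noteq> s \<longrightarrow>
           F e = mat (\<omega> * L) L (\<lambda>(i, j). \<Sum>d\<in>In_edges E head (tail e). (F d * K d e) $$ (i, j))) \<and>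
       (\<forall>t\<in>Rcv. \<exists>es. distinct es \<and> set es = In_edges E head t \<and>
           vec_space.rank (\<omega> * L) (block_concat (\<omega> * L) F es) = \<omega> * L))"

text \<open>Existence of a vector linear solution over GF(q)^L, the field being the type 'a.
  Scalar linear solvability is the case L = 1.\<close>
definition vector_linear_solvable ::
  "'a::field itself \<Rightarrow> 'e set \<Rightarrow> ('e \<Rightarrow> 'v) \<Rightarrow> ('e \<Rightarrow> 'v) \<Rightarrow> 'v \<Rightarrow> 'v set \<Rightarrow> nat \<Rightarrow> bool" where
  "vector_linear_solvable _ E tail head s Rcv L \<longleftrightarrow>
     (\<exists>(K :: 'e \<Rightarrow> 'e \<Rightarrow> 'a mat) F. is_vector_linear_solution E tail head s Rcv L K F)"

text \<open>Nodes: source, u_j, v_j (j < omega, 0-based, indices mod omega),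
  layer-4 nodes W j b (the two out-neighbours of v_j), and receivers R N,
  indexed by the set N of layer-4 nodes (encoded as pairs (j,b)).
  The Swirl network has no parallel edges, so edges are pairs (tail, head).\<close>

datatype snode = Src | NU nat | NV nat | NW nat bool | NR "(nat \<times> bool) set"

definition swirl_base_edges :: "nat \<Rightarrow> (snode \<times> snode) set" where
  "swirl_base_edges \<omega> =
     {(Src, NU j) | j. j < \<omega>} \<union>
     {(NU j, NV j) | j. j < \<omega>} \<union>
     {(NU (Suc j mod \<omega>), NV j) | j. j < \<omega>} \<union>
     {(NV j, NW j b) | j b. j < \<omega>}"

definition swirl_src_path :: "nat \<Rightarrow> (snode \<times> snode) list \<Rightarrow> bool" where
  "swirl_src_path \<omega> p \<longleftrightarrow> p \<noteq> [] \<and> set p \<subseteq> swirl_base_edges \<omega> \<and> fst (hd p) = Src \<and>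
     (\<forall>i. Suc i < length p \<longrightarrow> snd (p ! i) = fst (p ! Suc i))"

definition swirl_receiver_sets :: "nat \<Rightarrow> (nat \<times> bool) set set" where
  "swirl_receiver_sets \<omega> =
     {N. N \<subseteq> {(j, b). j < \<omega>} \<and> card N = \<omega> \<and>
         (\<exists>P :: nat \<Rightarrow> (snode \<times> snode) list.
            (\<forall>i<\<omega>. swirl_src_path \<omega> (P i) \<and> snd (last (P i)) \<in> (\<lambda>(j, b). NW j b) ` N) \<and>
            (\<forall>i<\<omega>. \<forall>k<\<omega>. i \<noteq> k \<longrightarrow> set (P i) \<inter> set (P k) = {}))}"

definition swirl_edges :: "nat \<Rightarrow> (snode \<times> snode) set" where
  "swirl_edges \<omega> = swirl_base_edges \<omega> \<union>
     {(NW j b, NR N) | j b N. N \<in> swirl_receiver_sets \<omega> \<and> (j, b) \<in> N}"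

definition swirl_receivers :: "nat \<Rightarrow> snode set" where
  "swirl_receivers \<omega> = NR ` swirl_receiver_sets \<omega>"

definition swirl_vl_solvable :: "'a::field itself \<Rightarrow> nat \<Rightarrow> nat \<Rightarrow> bool" where
  "swirl_vl_solvable ty \<omega> L =
     vector_linear_solvable ty (swirl_edges \<omega>) fst snd Src (swirl_receivers \<omega>) L"

end

theory Submission
  imports Defs "HOL-Number_Theory.Residues"
begin

lemma smod: "j < w \<Longrightarrow> Suc j mod w = (if Suc j = w then 0 else Suc j)"
  by auto

lemma swirl_edges_iff:
  "e \<in> swirl_edges w \<longleftrightarrow>
    (\<exists>a<w. e = (Src, NU a)) \<or> (\<exists>j<w. e = (NU j, NV j)) \<or> (\<exists>j<w. e = (NU (Suc j mod w), NV j)) \<or>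
    (\<exists>j b. j<w \<and> e = (NV j, NW j b)) \<or>
    (\<exists>j b N. N \<in> swirl_receiver_sets w \<and> (j,b) \<in> N \<and> e = (NW j b, NR N))"
  unfolding swirl_edges_def swirl_base_edges_def by blast

lemma base_iff:
  "e \<in> swirl_base_edges w \<longleftrightarrow>
    (\<exists>a<w. e = (Src, NU a)) \<or> (\<exists>j<w. e = (NU j, NV j)) \<or> (\<exists>j<w. e = (NU (Suc j mod w), NV j)) \<or>
    (\<exists>j b. j<w \<and> e = (NV j, NW j b))"
  unfolding swirl_base_edges_def by blast

lemma rs_sub: "N \<in> swirl_receiver_sets w \<Longrightarrow> (j,b) \<in> N \<Longrightarrow> j < w"
  unfolding swirl_receiver_sets_def by auto

lemma rs_card: "N \<in> swirl_receiver_sets w \<Longrightarrow> card N = w"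
  unfolding swirl_receiver_sets_def by auto

lemma path_shape:
  assumes "swirl_src_path w p" "snd (last p) = NW j0 b0"
  shows "\<exists>a j b. a < w \<and> j < w \<and> (a = j \<or> a = Suc j mod w) \<and>
           p = [(Src, NU a), (NU a, NV j), (NV j, NW j b)]"
proof -
  have ne: "p \<noteq> []" and sub: "set p \<subseteq> swirl_base_edges w" and hd: "fst (hd p) = Src"
    and cons: "\<And>i. Suc i < length p \<Longrightarrow> snd (p ! i) = fst (p ! Suc i)"
    using assms(1) unfolding swirl_src_path_def by auto
  obtain e0 r0 where p: "p = e0 # r0" using ne by (cases p) auto
  have "e0 \<in> swirl_base_edges w" using sub p by auto
  then obtain a where a: "a < w" "e0 = (Src, NU a)" using hd p unfolding base_iff by auto
  have "r0 \<noteq> []" using assms(2) p a by auto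
  then obtain e1 r1 where r0: "r0 = e1 # r1" by (cases r0) auto
  have c1: "snd e0 = fst e1" using cons[of 0] p r0 by auto
  have "e1 \<in> swirl_base_edges w" using sub p r0 by auto
  then obtain j where j: "j < w" "e1 = (NU a, NV j)" "a = j \<or> a = Suc j mod w"
    using c1 a unfolding base_iff by auto
  have "r1 \<noteq> []" using assms(2) p r0 j by auto
  then obtain e2 r2 where r1: "r1 = e2 # r2" by (cases r1) auto
  have c2: "snd e1 = fst e2" using cons[of 1] p r0 r1 by auto
  have "e2 \<in> swirl_base_edges w" using sub p r0 r1 by auto
  then obtain b where b: "e2 = (NV j, NW j b)"
    using c2 j unfolding base_iff by auto
  have "r2 = []"
  proof (rule ccontr)
    assume "r2 \<noteq> []"
    then obtain e3 r3 where r2: "r2 = e3 # r3" by (cases r2) auto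
    have c3: "snd e2 = fst e3" using cons[of 2] p r0 r1 r2 by auto
    have "e3 \<in> swirl_base_edges w" using sub p r0 r1 r2 by auto
    then show False using c3 b unfolding base_iff by auto
  qed
  then show ?thesis using p r0 r1 a j b by auto
qed

lemma rs_intro:
  assumes t: "\<forall>a<w. t a < w \<and> (t a = a \<or> Suc (t a) mod w = a)"
    and inj: "inj_on (\<lambda>a. (t a, bs a)) {..<w}"
  shows "(\<lambda>a. (t a, bs a)) ` {..<w} \<in> swirl_receiver_sets w"
proof -
  define P where "P a = [(Src, NU a), (NU a, NV (t a)), (NV (t a), NW (t a) (bs a))]" for a
  have path: "swirl_src_path w (P a)" if "a < w" for a
  proof -
    have "(NU a, NV (t a)) \<in> swirl_base_edges w"
      using t that unfolding base_iff by metis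
    moreover have "(Src, NU a) \<in> swirl_base_edges w" "(NV (t a), NW (t a) (bs a)) \<in> swirl_base_edges w"
      using t that unfolding base_iff by auto
    ultimately show ?thesis unfolding swirl_src_path_def P_def
      by (auto simp: less_Suc_eq nth_Cons split: nat.splits)
  qed
  have disj: "set (P a) \<inter> set (P c) = {}" if "a < w" "c < w" "a \<noteq> c" for a c
  proof -
    have "(t a, bs a) \<noteq> (t c, bs c)" using inj that unfolding inj_on_def by blast
    then show ?thesis using that unfolding P_def by auto
  qed
  have card: "card ((\<lambda>a. (t a, bs a)) ` {..<w}) = w"
    using card_image[OF inj] by simp
  have last: "snd (last (P a)) \<in> (\<lambda>(j, b). NW j b) ` ((\<lambda>a. (t a, bs a)) ` {..<w})" if "a < w" for a
    using that unfolding P_def by auto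
  have subs: "(\<lambda>a. (t a, bs a)) ` {..<w} \<subseteq> {(j, b). j < w}" using t by auto
  show ?thesis unfolding swirl_receiver_sets_def
    using path disj last subs card by blast
qed

lemma rs_elim:
  assumes N: "N \<in> swirl_receiver_sets w" and w: "w \<ge> 1"
  shows "\<exists>t bs. (\<forall>a<w. t a < w \<and> (t a = a \<or> Suc (t a) mod w = a)) \<and>
           inj_on (\<lambda>a. (t a, bs a)) {..<w} \<and> N = (\<lambda>a. (t a, bs a)) ` {..<w}"
proof -
  from N obtain P where sub: "N \<subseteq> {(j, b). j < w}" and cardN: "card N = w"
    and pth: "\<forall>i<w. swirl_src_path w (P i) \<and> snd (last (P i)) \<in> (\<lambda>(j, b). NW j b) ` N"
    and dis: "\<forall>i<w. \<forall>k<w. i \<noteq> k \<longrightarrow> set (P i) \<inter> set (P k) = {}"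
    unfolding swirl_receiver_sets_def by blast
  have "\<forall>i<w. \<exists>a j b. a < w \<and> j < w \<and> (a = j \<or> a = Suc j mod w) \<and>
           P i = [(Src, NU a), (NU a, NV j), (NV j, NW j b)]"
  proof (intro allI impI)
    fix i assume i: "i < w"
    obtain j0 b0 where "snd (last (P i)) = NW j0 b0" using pth i by auto
    then show "\<exists>a j b. a < w \<and> j < w \<and> (a = j \<or> a = Suc j mod w) \<and>
           P i = [(Src, NU a), (NU a, NV j), (NV j, NW j b)]"
      using path_shape pth i by blast
  qed
  then obtain au tv bv where sh: "\<And>i. i < w \<Longrightarrow> au i < w \<and> tv i < w \<and> (au i = tv i \<or> au i = Suc (tv i) mod w) \<and>
           P i = [(Src, NU (au i)), (NU (au i), NV (tv i)), (NV (tv i), NW (tv i) (bv i))]"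
    by metis
  have injau: "inj_on au {..<w}"
  proof (rule inj_onI)
    fix i k assume "i \<in> {..<w}" "k \<in> {..<w}" "au i = au k"
    then show "i = k" using sh[of i] sh[of k] dis by fastforce
  qed
  have injtb: "inj_on (\<lambda>i. (tv i, bv i)) {..<w}"
  proof (rule inj_onI)
    fix i k assume "i \<in> {..<w}" "k \<in> {..<w}" "(tv i, bv i) = (tv k, bv k)"
    then show "i = k" using sh[of i] sh[of k] dis by fastforce
  qed
  have ausub: "au ` {..<w} \<subseteq> {..<w}" using sh by auto
  have bij: "bij_betw au {..<w} {..<w}"
    using injau endo_inj_surj[OF finite_lessThan ausub injau] by (simp add: bij_betw_def)
  have img: "(\<lambda>i. (tv i, bv i)) ` {..<w} \<subseteq> N"
  proof
    fix x assume "x \<in> (\<lambda>i. (tv i, bv i)) ` {..<w}"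
    then obtain i where i: "i < w" "x = (tv i, bv i)" by auto
    have "snd (last (P i)) = NW (tv i) (bv i)" using sh[OF i(1)] by simp
    then show "x \<in> N" using pth i by auto
  qed
  have finN: "finite N" using cardN w card.infinite by fastforce
  have eqN: "(\<lambda>i. (tv i, bv i)) ` {..<w} = N"
    by (rule card_subset_eq[OF finN img]) (simp add: card_image[OF injtb] cardN)
  define ia where "ia = inv_into {..<w} au"
  have ia: "\<And>a. a < w \<Longrightarrow> ia a < w \<and> au (ia a) = a"
    using bij unfolding ia_def bij_betw_def by (metis f_inv_into_f inv_into_into lessThan_iff)
  have bij2: "bij_betw ia {..<w} {..<w}" unfolding ia_def using bij bij_betw_inv_into by blast
  define t where "t a = tv (ia a)" for a
  define bs where "bs a = bv (ia a)" for a
  have iaim: "ia ` {..<w} = {..<w}" using bij2 by (simp add: bij_betw_def)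
  have "(\<lambda>a. (t a, bs a)) ` {..<w} = (\<lambda>i. (tv i, bv i)) ` (ia ` {..<w})"
    unfolding t_def bs_def by (simp add: image_image)
  then have img2: "(\<lambda>a. (t a, bs a)) ` {..<w} = N" using iaim eqN by simp
  have inj2: "inj_on (\<lambda>a. (t a, bs a)) {..<w}"
    using eq_card_imp_inj_on img2 cardN
    by (metis card_lessThan finite_lessThan)
  show ?thesis
    apply (rule exI[of _ t], rule exI[of _ bs])
    using ia sh img2 inj2 unfolding t_def by (metis)
qed

lemma in_NU: "a < w \<Longrightarrow> In_edges (swirl_edges w) snd (NU a) = {(Src, NU a)}"
  unfolding In_edges_def swirl_edges_iff by auto

lemma in_NV: "j < w \<Longrightarrow> In_edges (swirl_edges w) snd (NV j) = {(NU j, NV j), (NU (Suc j mod w), NV j)}"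
  unfolding In_edges_def swirl_edges_iff by auto

lemma in_NW: "j < w \<Longrightarrow> In_edges (swirl_edges w) snd (NW j b) = {(NV j, NW j b)}"
  unfolding In_edges_def swirl_edges_iff by auto

lemma in_NR: "N \<in> swirl_receiver_sets w \<Longrightarrow> In_edges (swirl_edges w) snd (NR N) = (\<lambda>(j,b). (NW j b, NR N)) ` N"
  unfolding In_edges_def swirl_edges_iff by auto

lemma in_NR_card: "N \<in> swirl_receiver_sets w \<Longrightarrow> card (In_edges (swirl_edges w) snd (NR N)) = w"
  by (subst in_NR, assumption, subst card_image) (auto simp: inj_on_def rs_card)

lemma out_src: "Out_edges (swirl_edges w) fst Src = (\<lambda>a. (Src, NU a)) ` {..<w}"
  unfolding Out_edges_def swirl_edges_iff by auto

lemma out_src_card: "card (Out_edges (swirl_edges w) fst Src) = w"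
  unfolding out_src by (subst card_image) (auto simp: inj_on_def)

lemma bc_len: "(\<forall>e\<in>set es. F e \<in> carrier_mat n L) \<Longrightarrow> length (concat (map (\<lambda>e. cols (F e)) es)) = length es * L"
  by (induction es) auto

lemma bc_carrier: "(\<forall>e\<in>set es. F e \<in> carrier_mat n L) \<Longrightarrow> block_concat n F es \<in> carrier_mat n (length es * L)"
  unfolding block_concat_def using bc_len[of es F n L] by (metis mat_of_cols_carrier(1))

lemma bc_cols: "(\<forall>e\<in>set es. F e \<in> carrier_mat n L) \<Longrightarrow>
   set (cols (block_concat n F es)) = (\<Union>e\<in>set es. set (cols (F e)))"
  unfolding block_concat_def
  by (subst cols_mat_of_cols) (auto dest!: subsetD[OF cols_dim])

lemma bc_nth: "(\<forall>e\<in>set es. F e \<in> carrier_mat n L) \<Longrightarrow> t < length es \<Longrightarrow> k < L \<Longrightarrow>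
   concat (map (\<lambda>e. cols (F e)) es) ! (t*L+k) = col (F (es!t)) k"
proof (induction es arbitrary: t)
  case Nil then show ?case by simp
next
  case (Cons e es)
  have Fe: "F e \<in> carrier_mat n L" using Cons by auto
  show ?case
  proof (cases t)
    case 0 then show ?thesis using Cons Fe by (auto simp: nth_append)
  next
    case (Suc t')
    have "concat (map (\<lambda>e. cols (F e)) (e # es)) ! (t*L+k) = concat (map (\<lambda>e. cols (F e)) es) ! (t'*L+k)"
      using Fe Suc by (auto simp: nth_append)
    then show ?thesis using Cons Suc by auto
  qed
qed

lemma bc_entry: "(\<forall>e\<in>set es. F e \<in> carrier_mat n L) \<Longrightarrow> t < length es \<Longrightarrow> k < L \<Longrightarrow> i < n \<Longrightarrow>
   block_concat n F es $$ (i, t*L+k) = F (es!t) $$ (i,k)"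
proof -
  assume a: "\<forall>e\<in>set es. F e \<in> carrier_mat n L" "t < length es" "k < L" "i < n"
  have "t*L+k < length es * L"
  proof -
    have "t*L + k < t*L + L" using a by simp
    also have "\<dots> = Suc t * L" by simp
    also have "\<dots> \<le> length es * L" using a(2) by (intro mult_le_mono1) simp
    finally show ?thesis .
  qed
  moreover have Fet: "F (es!t) \<in> carrier_mat n L" using a nth_mem by blast
  then have ce: "col (F (es!t)) k $ i = F (es!t) $$ (i,k)" using a(3,4) by (metis carrier_matD index_col)
  ultimately show ?thesis unfolding block_concat_def using a
    by (subst mat_of_cols_index) (auto simp: bc_len bc_nth ce)
qed

lemma rank_full_iff:
  fixes M :: "'a::field mat"
  assumes M: "M \<in> carrier_mat n n"
  shows "vec_space.rank n M = n \<longleftrightarrow>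
     (\<forall>\<phi>\<in>carrier_vec n. (\<forall>c\<in>set (cols M). c \<bullet> \<phi> = 0) \<longrightarrow> \<phi> = 0\<^sub>v n)"
proof -
  have "vec_space.rank n M = n \<longleftrightarrow> det M \<noteq> 0" using vec_space.det_rank_iff[OF M] by simp
  also have "\<dots> \<longleftrightarrow> det (transpose_mat M) \<noteq> 0" using det_transpose[OF M] by simp
  also have "\<dots> \<longleftrightarrow> \<not> (\<exists>v. v \<in> carrier_vec n \<and> v \<noteq> 0\<^sub>v n \<and> transpose_mat M *\<^sub>v v = 0\<^sub>v n)"
    using det_0_iff_vec_prod_zero_field[of "transpose_mat M" n] M by simp
  also have "\<dots> \<longleftrightarrow> (\<forall>\<phi>\<in>carrier_vec n. (\<forall>c\<in>set (cols M). c \<bullet> \<phi> = 0) \<longrightarrow> \<phi> = 0\<^sub>v n)"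
  proof -
    have eq: "transpose_mat M *\<^sub>v v = 0\<^sub>v n \<longleftrightarrow> (\<forall>c\<in>set (cols M). c \<bullet> v = 0)" if v: "v \<in> carrier_vec n" for v
    proof
      assume h: "transpose_mat M *\<^sub>v v = 0\<^sub>v n"
      show "\<forall>c\<in>set (cols M). c \<bullet> v = 0"
      proof
        fix c assume "c \<in> set (cols M)"
        then obtain i where i: "i < n" "c = col M i" using M by (auto simp: in_set_conv_nth)
        have "(transpose_mat M *\<^sub>v v) $ i = c \<bullet> v" using i M by simp
        then show "c \<bullet> v = 0" using h i by simp
      qed
    next
      assume h: "\<forall>c\<in>set (cols M). c \<bullet> v = 0"
      show "transpose_mat M *\<^sub>v v = 0\<^sub>v n"
      proof (rule eq_vecI)
        fix i assume "i < dim_vec (0\<^sub>v n :: 'a vec)"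
        then have i: "i < n" by simp
        have "col M i \<in> set (cols M)" using i M by (simp add: cols_def)
        then show "(transpose_mat M *\<^sub>v v) $ i = 0\<^sub>v n $ i" using h i M by simp
      qed (use M in simp)
    qed
    show ?thesis using eq by blast
  qed
  finally show ?thesis .
qed

lemma modsuc_inj: "x < w \<Longrightarrow> y < w \<Longrightarrow> Suc x mod w = Suc y mod w \<Longrightarrow> x = y"
  by (simp add: smod split: if_splits)

lemma comb:
  fixes r :: "nat \<Rightarrow> bool \<Rightarrow> 'a::field" and \<phi> :: "nat \<Rightarrow> 'a"
  assumes w: "w \<ge> 3"
    and t: "\<forall>a<w. t a < w \<and> (t a = a \<or> Suc (t a) mod w = a)"
    and inj: "inj_on (\<lambda>a. (t a, bs a)) {..<w}"
    and rnz: "\<forall>j b. r j b \<noteq> 0" and rdif: "\<forall>j. r j True \<noteq> r j False"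
    and cyc: "\<forall>\<psi>::nat\<Rightarrow>'a. (\<forall>j<w. \<exists>b. \<psi> j + r j b * \<psi> (Suc j mod w) = 0) \<longrightarrow> (\<forall>j<w. \<psi> j = 0)"
    and eq: "\<forall>a<w. \<phi> (t a) + r (t a) (bs a) * \<phi> (Suc (t a) mod w) = 0"
  shows "\<forall>a<w. \<phi> a = 0"
proof -
  have F1: "\<phi> a + r a (bs a) * \<phi> (Suc a mod w) = 0" if "a < w" "t a = a" for a
    using eq[rule_format, OF that(1)] that(2) by simp
  have F2: "\<phi> p + r p (bs a) * \<phi> a = 0" if "a < w" "t a \<noteq> a" "p < w" "Suc p mod w = a" for a p
  proof -
    have "Suc (t a) mod w = a" "t a < w" using t that by auto
    then have "t a = p" using modsuc_inj that by metis
    then show ?thesis using eq[rule_format, OF that(1)] that by simp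
  qed
  have two: "\<phi> a = 0 \<and> \<phi> (Suc a mod w) = 0"
    if a: "a < w" "t a = a" "t (Suc a mod w) \<noteq> Suc a mod w" for a
  proof -
    let ?s = "Suc a mod w"
    have s: "?s < w" using a by simp
    have "t ?s < w \<and> Suc (t ?s) mod w = ?s" using t s a(3) by blast
    then have ts: "t ?s = a" using modsuc_inj a(1) by blast
    have neq: "a \<noteq> ?s" using a w by (simp add: smod)
    have "bs a \<noteq> bs ?s"
    proof
      assume "bs a = bs ?s"
      then have "(t a, bs a) = (t ?s, bs ?s)" using ts a by simp
      from inj_onD[OF inj this] a s have "a = ?s" by simp
      then show False using neq by simp
    qed
    have rd: "r a True \<noteq> r a False" "r a False \<noteq> r a True" using rdif by (auto simp: eq_commute)
    have e1: "\<phi> a + r a (bs a) * \<phi> ?s = 0" using F1 a by simp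
    have e2: "\<phi> a + r a (bs ?s) * \<phi> ?s = 0" using eq[rule_format, OF s] ts by simp
    have "(r a (bs a) - r a (bs ?s)) * \<phi> ?s = (\<phi> a + r a (bs a) * \<phi> ?s) - (\<phi> a + r a (bs ?s) * \<phi> ?s)"
      by (simp add: algebra_simps)
    then have "(r a (bs a) - r a (bs ?s)) * \<phi> ?s = 0" using e1 e2 by simp
    moreover have "r a (bs a) - r a (bs ?s) \<noteq> 0" using \<open>bs a \<noteq> bs ?s\<close> rd
      by (cases "bs a"; cases "bs ?s") auto
    ultimately have "\<phi> ?s = 0" by simp
    then show ?thesis using e1 by simp
  qed
  have FW: "\<forall>a<w. (\<forall>i\<le>d. t ((a+i) mod w) = (a+i) mod w) \<and> t ((a+d+1) mod w) \<noteq> (a+d+1) mod w \<longrightarrow> \<phi> a = 0" for d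
  proof (induction d)
    case 0
    show ?case
    proof (intro allI impI)
      fix a assume "a < w" and "(\<forall>i\<le>0. t ((a+i) mod w) = (a+i) mod w) \<and> t ((a+0+1) mod w) \<noteq> (a+0+1) mod w"
      then show "\<phi> a = 0" using two[of a] by auto
    qed
  next
    case (Suc d)
    show ?case
    proof (intro allI impI)
      fix a assume h0: "a < w" and h1: "(\<forall>i\<le>Suc d. t ((a+i) mod w) = (a+i) mod w) \<and> t ((a+Suc d+1) mod w) \<noteq> (a+Suc d+1) mod w"
      note h = h0 h1
      let ?a' = "Suc a mod w"
      have a': "?a' < w" using h by simp
      have m: "(?a' + i) mod w = (a + Suc i) mod w" for i by (simp add: mod_add_left_eq)
      have c1: "\<forall>i\<le>d. t ((?a'+i) mod w) = (?a'+i) mod w"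
      proof (intro allI impI)
        fix i assume "i \<le> d"
        then have "Suc i \<le> Suc d" by simp
        then have "t ((a + Suc i) mod w) = (a + Suc i) mod w" using h1 by blast
        then show "t ((?a'+i) mod w) = (?a'+i) mod w" unfolding m .
      qed
      have e: "?a'+d+1 = ?a' + Suc d" by simp
      have e2: "a+Suc d+1 = a + Suc (Suc d)" by simp
      have c2: "t ((?a'+d+1) mod w) \<noteq> (?a'+d+1) mod w"
        unfolding e m e2[symmetric] by (rule conjunct2[OF h1])
      have "\<phi> ?a' = 0" using Suc.IH a' c1 c2 by blast
      moreover have "t a = a" using h by (metis le0 add_0_right mod_less)
      ultimately show "\<phi> a = 0" using F1 h by (metis add_0_right mult_zero_right)
    qed
  qed
  have BW: "\<forall>c<w. t c = c \<and> (\<forall>i\<in>{1..Suc d}. t ((c+i) mod w) \<noteq> (c+i) mod w) \<longrightarrow> \<phi> ((c + Suc d) mod w) = 0" for d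
  proof (induction d)
    case 0
    then show ?case using two by auto
  next
    case (Suc d)
    show ?case
    proof (intro allI impI)
      fix c assume h0: "c < w" and h1: "t c = c \<and> (\<forall>i\<in>{1..Suc (Suc d)}. t ((c+i) mod w) \<noteq> (c+i) mod w)"
      note h = h0 h1
      have q0: "\<phi> ((c + Suc d) mod w) = 0" using Suc.IH h by auto
      let ?a = "(c + Suc (Suc d)) mod w"
      let ?q = "(c + Suc d) mod w"
      have "Suc (Suc d) \<in> {1..Suc (Suc d)}" by simp
      then have ta: "t ?a \<noteq> ?a" using h1 by blast
      have sq: "Suc ?q mod w = ?a" by (simp add: mod_Suc_eq)
      have "\<phi> ?q + r ?q (bs ?a) * \<phi> ?a = 0" using F2[of ?a ?q] ta sq h by auto
      then have "r ?q (bs ?a) * \<phi> ?a = 0" using q0 by simp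
      then show "\<phi> ?a = 0" using rnz by simp
    qed
  qed
  show ?thesis
  proof (cases "\<forall>x<w. t x = x")
    case True
    have "\<forall>j<w. \<exists>b. \<phi> j + r j b * \<phi> (Suc j mod w) = 0" using F1 True by blast
    then show ?thesis using cyc by blast
  next
    case nall: False
    show ?thesis
    proof (cases "\<forall>x<w. t x \<noteq> x")
      case True
      have "\<forall>j<w. \<exists>b. \<phi> j + r j b * \<phi> (Suc j mod w) = 0"
      proof (intro allI impI)
        fix j assume j: "j < w"
        have "\<phi> j + r j (bs (Suc j mod w)) * \<phi> (Suc j mod w) = 0"
          using F2[of "Suc j mod w" j] True j w by simp
        then show "\<exists>b. \<phi> j + r j b * \<phi> (Suc j mod w) = 0" by blast
      qed
      then show ?thesis using cyc by blast
    next
      case False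
      then obtain x1 where x1: "x1 < w" "t x1 = x1" by auto
      from nall obtain x2 where x2: "x2 < w" "t x2 \<noteq> x2" by auto
      show ?thesis
      proof (intro allI impI)
        fix a assume a: "a < w"
        show "\<phi> a = 0"
        proof (cases "t a = a")
          case True
          define D where "D = {i. t ((a+i) mod w) \<noteq> (a+i) mod w}"
          have "x2 + w - a \<in> D"
          proof -
            have "(a + (x2 + w - a)) mod w = x2" using a x2 by simp
            then show ?thesis using x2 unfolding D_def by simp
          qed
          then have i0D: "(LEAST i. i \<in> D) \<in> D" by (rule LeastI)
          define i0 where "i0 = (LEAST i. i \<in> D)"
          have i0D': "i0 \<in> D" unfolding i0_def by (rule i0D)
          have "i0 \<noteq> 0"
          proof
            assume "i0 = 0"
            then have "0 \<in> D" using i0D unfolding i0_def by simp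
            then show False using True a unfolding D_def by simp
          qed
          then obtain d where d: "i0 = Suc d" by (cases i0) auto
          have "\<forall>i\<le>d. t ((a+i) mod w) = (a+i) mod w"
          proof (intro allI impI)
            fix i assume "i \<le> d"
            then have "i < i0" using d by simp
            then have "i \<notin> D" unfolding i0_def by (rule not_less_Least)
            then show "t ((a+i) mod w) = (a+i) mod w" unfolding D_def by simp
          qed
          moreover have "t ((a+d+1) mod w) \<noteq> (a+d+1) mod w" using i0D' d unfolding D_def by simp
          ultimately show ?thesis using FW[of d] a by blast
        next
          case False
          define D where "D = {i. i \<le> w \<and> t ((a + w - i) mod w) = (a + w - i) mod w}"
          define i1 where "i1 = (if x1 \<le> a then a - x1 else a + w - x1)"
          have "i1 \<in> D"
          proof -
            have "i1 \<le> w" using a x1 unfolding i1_def by auto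
            moreover have "(a + w - i1) mod w = x1" using a x1 unfolding i1_def by auto
            ultimately show ?thesis using x1 unfolding D_def by simp
          qed
          then have i0D: "(LEAST i. i \<in> D) \<in> D" by (rule LeastI)
          define i0 where "i0 = (LEAST i. i \<in> D)"
          have i0D': "i0 \<in> D" unfolding i0_def by (rule i0D)
          have i0w: "i0 \<le> w" using i0D' unfolding D_def by simp
          have "i0 \<noteq> 0"
          proof
            assume "i0 = 0"
            then have "0 \<in> D" using i0D unfolding i0_def by simp
            then show False using False a unfolding D_def by simp
          qed
          then obtain d where d: "i0 = Suc d" by (cases i0) auto
          define c where "c = (a + w - i0) mod w"
          have c: "c < w" "t c = c" using i0D' w unfolding c_def D_def by auto
          have cm: "(c + i) mod w = (a + w - (i0 - i)) mod w" if "i \<le> i0" for i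
          proof -
            have "(c + i) mod w = (a + w - i0 + i) mod w" unfolding c_def by (simp add: mod_add_left_eq)
            also have "a + w - i0 + i = a + w - (i0 - i)" using that i0w by simp
            finally show ?thesis .
          qed
          have "\<forall>i\<in>{1..Suc d}. t ((c+i) mod w) \<noteq> (c+i) mod w"
          proof
            fix i assume i: "i \<in> {1..Suc d}"
            then have "i0 - i < i0" using d by auto
            then have "i0 - i \<notin> D" unfolding i0_def by (rule not_less_Least)
            moreover have "i0 - i \<le> w" using i0w by simp
            ultimately show "t ((c+i) mod w) \<noteq> (c+i) mod w" using cm[of i] i d unfolding D_def by auto
          qed
          then have "\<phi> ((c + Suc d) mod w) = 0" using BW[of d] c by blast
          moreover have "(c + Suc d) mod w = a" using cm[of i0] d a by simp
          ultimately show ?thesis by simp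
        qed
      qed
    qed
  qed
qed

definition rr :: "nat \<Rightarrow> bool \<Rightarrow> 'a::field" where
  "rr j b = (if j = 0 then 2 else 1) * (if b then 1 else -1)"

lemma cyc_rr:
  fixes \<psi> :: "nat \<Rightarrow> 'a::field"
  assumes two: "(2::'a) \<noteq> 0" and three: "(3::'a) \<noteq> 0" and w: "w \<ge> 2"
    and h: "\<forall>j<w. \<exists>b. \<psi> j + rr j b * \<psi> (Suc j mod w) = 0"
  shows "\<forall>j<w. \<psi> j = 0"
proof -
  obtain bb where bb: "\<forall>j<w. \<psi> j + rr j (bb j) * \<psi> (Suc j mod w) = 0" using h by metis
  define \<rho> where "\<rho> j = (rr j (bb j) :: 'a)" for j
  have rnz: "\<rho> j \<noteq> 0" for j using two unfolding \<rho>_def rr_def by auto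
  have rec: "\<psi> j = - \<rho> j * \<psi> (Suc j mod w)" if "j < w" for j
    using bb that unfolding \<rho>_def by (simp add: eq_neg_iff_add_eq_0)
  have P: "k < w \<Longrightarrow> \<psi> 0 = (\<Prod>j<k. - \<rho> j) * \<psi> k" for k
  proof (induction k)
    case 0 then show ?case by simp
  next
    case (Suc k)
    then have "\<psi> 0 = (\<Prod>j<k. - \<rho> j) * \<psi> k" by simp
    also have "\<psi> k = - \<rho> k * \<psi> (Suc k)" using rec[of k] Suc.prems by simp
    finally show ?case by (simp add: mult.assoc)
  qed
  obtain m where m: "w = Suc m" using w by (cases w) auto
  have "\<psi> 0 = (\<Prod>j<m. - \<rho> j) * \<psi> m" using P m by simp
  also have "\<psi> m = - \<rho> m * \<psi> 0" using rec[of m] m by simp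
  finally have e0: "\<psi> 0 = (\<Prod>j<w. - \<rho> j) * \<psi> 0" using m by (simp add: mult.assoc)
  define p1 where "p1 = (\<Prod>j<m. - \<rho> (Suc j))"
  have "p1 ^ 2 = (\<Prod>j<m. (- \<rho> (Suc j)) ^ 2)" unfolding p1_def by (simp add: prod_power_distrib)
  also have "\<dots> = 1" by (rule prod.neutral) (auto simp: \<rho>_def rr_def)
  finally have "p1 = 1 \<or> p1 = -1" by (simp add: power2_eq_1_iff)
  moreover have "(\<Prod>j<w. - \<rho> j) = - \<rho> 0 * p1" unfolding m p1_def by (simp only: prod.lessThan_Suc_shift)
  moreover have "\<rho> 0 = 2 \<or> \<rho> 0 = -2" unfolding \<rho>_def rr_def by auto
  ultimately have pr: "(\<Prod>j<w. - \<rho> j) = 2 \<or> (\<Prod>j<w. - \<rho> j) = -2" by auto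
  have "(1 - (\<Prod>j<w. - \<rho> j)) * \<psi> 0 = 0" using e0 by (simp add: algebra_simps)
  moreover have "1 - (\<Prod>j<w. - \<rho> j) \<noteq> 0"
  proof -
    have n21: "(2::'a) \<noteq> 1"
    proof
      assume h: "(2::'a) = 1"
      have "(1::'a) = 2 - 1" by simp
      also have "\<dots> = 0" using h by simp
      finally show False by simp
    qed
    have "(1::'a) - 2 = -1" by simp
    moreover have "(1::'a) - -2 = 3" by simp
    ultimately show ?thesis using pr three n21 by auto
  qed
  ultimately have z0: "\<psi> 0 = 0" by simp
  show ?thesis
  proof (intro allI impI)
    fix k assume k: "k < w"
    have "(\<Prod>j<k. - \<rho> j) \<noteq> 0" using rnz by (simp add: prod_zero_iff)
    then show "\<psi> k = 0" using P[OF k] z0 by simp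
  qed
qed

definition dl :: "nat \<Rightarrow> nat \<Rightarrow> 'a::field" where "dl i a = (if i = a then 1 else 0)"

definition gv :: "nat \<Rightarrow> nat \<Rightarrow> bool \<Rightarrow> nat \<Rightarrow> 'a::field" where
  "gv w j b i = dl i j + (if i = Suc j mod w then rr j b else 0)"

fun fv :: "nat \<Rightarrow> snode \<Rightarrow> snode \<Rightarrow> nat \<Rightarrow> 'a::field" where
  "fv w Src (NU a) i = dl i a"
| "fv w (NU a) y i = dl i a"
| "fv w (NV j) (NW j' b) i = gv w j b i"
| "fv w (NW j b) y i = gv w j b i"
| "fv w x y i = 0"

fun kv :: "nat \<Rightarrow> snode \<Rightarrow> snode \<Rightarrow> snode \<Rightarrow> 'a::field" where
  "kv w (NU a) (NV j) (NW j' b) = (if a = j then 1 else rr j b)"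
| "kv w x y z = 1"

definition Fc :: "nat \<Rightarrow> snode \<times> snode \<Rightarrow> 'a::field mat" where
  "Fc w e = mat w 1 (\<lambda>(i,k). fv w (fst e) (snd e) i)"

definition Kc :: "nat \<Rightarrow> snode \<times> snode \<Rightarrow> snode \<times> snode \<Rightarrow> 'a::field mat" where
  "Kc w d e = mat 1 1 (\<lambda>_. if snd d = fst e then kv w (fst d) (snd d) (snd e) else 0)"

lemma mult11: "(A::'a::field mat) \<in> carrier_mat n 1 \<Longrightarrow> B \<in> carrier_mat 1 1 \<Longrightarrow> i < n \<Longrightarrow>
   (A * B) $$ (i, 0) = A $$ (i, 0) * B $$ (0, 0)"
  by (simp add: scalar_prod_def)

lemma FK: "i < w \<Longrightarrow> ((Fc w d :: 'a::field mat) * Kc w d e) $$ (i, 0) =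
   fv w (fst d) (snd d) i * (if snd d = fst e then kv w (fst d) (snd d) (snd e) else 0)"
  by (subst mult11[of _ w]) (auto simp: Fc_def Kc_def)

lemma sum_gv:
  fixes f :: "nat \<Rightarrow> 'a::field"
  assumes "j < w"
  shows "(\<Sum>i<w. gv w j b i * f i) = f j + rr j b * f (Suc j mod w)"
proof -
  have "(\<Sum>i<w. gv w j b i * f i) = (\<Sum>i<w. dl i j * f i) + (\<Sum>i<w. (if i = Suc j mod w then rr j b else 0) * f i)"
    unfolding gv_def by (simp add: distrib_right sum.distrib)
  also have "(\<Sum>i<w. dl i j * f i) = (\<Sum>i<w. (if i = j then f j else 0))"
    by (rule sum.cong) (auto simp: dl_def)
  also have "\<dots> = f j" using assms by simp
  also have "(\<Sum>i<w. (if i = Suc j mod w then rr j b else 0) * f i) = (\<Sum>i<w. (if i = Suc j mod w then rr j b * f (Suc j mod w) else 0))"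
    by (rule sum.cong) auto
  also have "\<dots> = rr j b * f (Suc j mod w)" using assms by simp
  finally show ?thesis .
qed

lemma rec_A:
  assumes e: "e \<in> swirl_edges w" and ns: "fst e \<noteq> Src" and w: "w \<ge> 2"
  shows "(Fc w e :: 'a::field mat) = mat (w*1) 1 (\<lambda>(i,j). \<Sum>d\<in>In_edges (swirl_edges w) snd (fst e). (Fc w d * Kc w d e) $$ (i,j))"
proof (rule eq_matI)
  show "dim_row (Fc w e :: 'a mat) = dim_row (mat (w*1) 1 (\<lambda>(i,j). \<Sum>d\<in>In_edges (swirl_edges w) snd (fst e). (Fc w d * Kc w d e :: 'a mat) $$ (i,j)))"
    by (simp add: Fc_def)
  show "dim_col (Fc w e :: 'a mat) = dim_col (mat (w*1) 1 (\<lambda>(i,j). \<Sum>d\<in>In_edges (swirl_edges w) snd (fst e). (Fc w d * Kc w d e :: 'a mat) $$ (i,j)))"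
    by (simp add: Fc_def)
  fix i j assume i: "i < dim_row (mat (w*1) 1 (\<lambda>(i,j). \<Sum>d\<in>In_edges (swirl_edges w) snd (fst e). (Fc w d * Kc w d e :: 'a mat) $$ (i,j)))"
    and j: "j < dim_col (mat (w*1) 1 (\<lambda>(i,j). \<Sum>d\<in>In_edges (swirl_edges w) snd (fst e). (Fc w d * Kc w d e :: 'a mat) $$ (i,j)))"
  then have i: "i < w" and j0: "j = 0" by auto
  have lhs: "(Fc w e :: 'a mat) $$ (i, j) = fv w (fst e) (snd e) i" using i j0 by (simp add: Fc_def)
  have rhs: "mat (w*1) 1 (\<lambda>(i,j). \<Sum>d\<in>In_edges (swirl_edges w) snd (fst e). (Fc w d * Kc w d e :: 'a mat) $$ (i,j)) $$ (i, j)
     = (\<Sum>d\<in>In_edges (swirl_edges w) snd (fst e). fv w (fst d) (snd d) i * kv w (fst d) (snd d) (snd e))"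
    using i j0 by (auto simp: FK In_edges_def intro!: sum.cong)
  have main: "fv w (fst e) (snd e) i = (\<Sum>d\<in>In_edges (swirl_edges w) snd (fst e). fv w (fst d) (snd d) i * (kv w (fst d) (snd d) (snd e) :: 'a))"
  proof -
    from e ns consider
      (u1) j' where "j' < w" "e = (NU j', NV j')"
    | (u2) j' where "j' < w" "e = (NU (Suc j' mod w), NV j')"
    | (v) j' b where "j' < w" "e = (NV j', NW j' b)"
    | (r) j' b N where "N \<in> swirl_receiver_sets w" "(j', b) \<in> N" "e = (NW j' b, NR N)"
      unfolding swirl_edges_iff by auto
    then show ?thesis
    proof cases
      case u1 then show ?thesis by (simp add: in_NU)
    next
      case u2 then show ?thesis by (simp add: in_NU)
    next
      case v
      have neq: "Suc j' mod w \<noteq> j'" using v w by (simp add: smod)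
      have "(\<Sum>d\<in>In_edges (swirl_edges w) snd (fst e). fv w (fst d) (snd d) i * (kv w (fst d) (snd d) (snd e) :: 'a))
          = dl i j' * 1 + dl i (Suc j' mod w) * rr j' b"
        using v neq by (simp add: in_NV)
      then show ?thesis using v by (simp add: gv_def dl_def)
    next
      case r
      have "j' < w" using r rs_sub by blast
      then show ?thesis using r by (simp add: in_NW)
    qed
  qed
  show "(Fc w e :: 'a mat) $$ (i, j) = mat (w*1) 1 (\<lambda>(i,j). \<Sum>d\<in>In_edges (swirl_edges w) snd (fst e). (Fc w d * Kc w d e :: 'a mat) $$ (i,j)) $$ (i, j)"
    unfolding lhs rhs main ..
qed

lemma rr_props:
  assumes two: "(2::'a::field) \<noteq> 0"
  shows "\<forall>j b. (rr j b :: 'a) \<noteq> 0" "\<forall>j. (rr j True :: 'a) \<noteq> rr j False"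
proof -
  show "\<forall>j b. (rr j b :: 'a) \<noteq> 0" using two by (auto simp: rr_def)
  have four: "(2::'a) \<noteq> - 2"
  proof
    assume "(2::'a) = - 2"
    then have "(2::'a) + 2 = 0" by (simp only: eq_neg_iff_add_eq_0)
    then have "(2::'a) * 2 = 0" by (simp only: mult_2)
    then show False using two by (simp only: mult_eq_0_iff) simp
  qed
  have one: "(1::'a) \<noteq> - 1" using two by (metis eq_neg_iff_add_eq_0 one_add_one)
  show "\<forall>j. (rr j True :: 'a) \<noteq> rr j False" using four one by (auto simp: rr_def)
qed

lemma rcv_A:
  assumes N: "N \<in> swirl_receiver_sets w" and w: "w \<ge> 6"
    and two: "(2::'a::field) \<noteq> 0" and three: "(3::'a) \<noteq> 0"
  shows "\<exists>es. distinct es \<and> set es = In_edges (swirl_edges w) snd (NR N) \<and>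
     vec_space.rank (w*1) (block_concat (w*1) (Fc w :: _ \<Rightarrow> 'a mat) es) = w*1"
proof -
  have cN: "card N = w" using rs_card[OF N] .
  then have finN: "finite N" using w card.infinite by fastforce
  have fin: "finite (In_edges (swirl_edges w) snd (NR N))" using in_NR[OF N] finN by simp
  obtain es where es: "distinct es" "set es = In_edges (swirl_edges w) snd (NR N)"
    using finite_distinct_list[OF fin] by metis
  have len: "length es = w" using distinct_card[OF es(1)] es(2) in_NR_card[OF N] by simp
  have Fcar: "\<forall>e\<in>set es. (Fc w e :: 'a mat) \<in> carrier_mat w 1" by (simp add: Fc_def)
  define M where "M = block_concat w (Fc w :: _ \<Rightarrow> 'a mat) es"
  have Mc: "M \<in> carrier_mat w w" using bc_carrier[OF Fcar] len unfolding M_def by simp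
  have "vec_space.rank w M = w"
  proof (subst rank_full_iff[OF Mc], intro ballI impI)
    fix \<phi> :: "'a vec" assume \<phi>: "\<phi> \<in> carrier_vec w" and h: "\<forall>c\<in>set (cols M). c \<bullet> \<phi> = 0"
    have eqs: "\<phi> $ j + rr j b * \<phi> $ (Suc j mod w) = 0" if jb: "(j,b) \<in> N" for j b
    proof -
      have j: "j < w" using rs_sub[OF N jb] .
      let ?e = "(NW j b, NR N)"
      have eS: "?e \<in> set es" using es(2) in_NR[OF N] jb by auto
      have "col (Fc w ?e :: 'a mat) 0 \<in> set (cols (Fc w ?e :: 'a mat))"
        by (simp add: Fc_def cols_def)
      then have "col (Fc w ?e :: 'a mat) 0 \<in> set (cols M)"
        unfolding M_def bc_cols[OF Fcar] using eS by blast
      then have z: "col (Fc w ?e :: 'a mat) 0 \<bullet> \<phi> = 0" using h by blast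
      have "col (Fc w ?e :: 'a mat) 0 \<bullet> \<phi> = (\<Sum>i<w. gv w j b i * \<phi> $ i)"
        using \<phi> by (simp add: scalar_prod_def Fc_def lessThan_atLeast0)
      also have "\<dots> = \<phi> $ j + rr j b * \<phi> $ (Suc j mod w)" using sum_gv[OF j] .
      finally show ?thesis using z by simp
    qed
    obtain t bs where t: "\<forall>a<w. t a < w \<and> (t a = a \<or> Suc (t a) mod w = a)"
      and inj: "inj_on (\<lambda>a. (t a, bs a)) {..<w}" and Neq: "N = (\<lambda>a. (t a, bs a)) ` {..<w}"
      using rs_elim[OF N] w by auto
    have eq: "\<forall>a<w. \<phi> $ (t a) + rr (t a) (bs a) * \<phi> $ (Suc (t a) mod w) = 0"
    proof (intro allI impI)
      fix a assume "a < w"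
      then have "(t a, bs a) \<in> N" using Neq by blast
      from eqs[OF this] show "\<phi> $ (t a) + rr (t a) (bs a) * \<phi> $ (Suc (t a) mod w) = 0" .
    qed
    have cyc: "\<forall>\<psi>::nat\<Rightarrow>'a. (\<forall>j<w. \<exists>b. \<psi> j + rr j b * \<psi> (Suc j mod w) = 0) \<longrightarrow> (\<forall>j<w. \<psi> j = 0)"
    proof (rule allI, rule impI)
      fix \<psi> :: "nat\<Rightarrow>'a" assume hp: "\<forall>j<w. \<exists>b. \<psi> j + rr j b * \<psi> (Suc j mod w) = 0"
      have w2: "2 \<le> w" using w by simp
      show "\<forall>j<w. \<psi> j = 0" by (rule cyc_rr[OF two three w2 hp])
    qed
    have w3: "w \<ge> 3" using w by simp
    have "\<forall>a<w. \<phi> $ a = 0"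
      using comb[of w t bs rr "\<lambda>a. \<phi> $ a", OF w3 t inj rr_props(1)[OF two] rr_props(2)[OF two] cyc eq] by simp
    then show "\<phi> = 0\<^sub>v w" using \<phi> by (intro eq_vecI) auto
  qed
  then show ?thesis using es unfolding M_def by auto
qed

theorem partA:
  assumes w: "w \<ge> 6" and two: "(2::'a::field) \<noteq> 0" and three: "(3::'a) \<noteq> 0"
  shows "swirl_vl_solvable TYPE('a) w 1"
proof -
  let ?E = "swirl_edges w"
  define srcs where "srcs = map (\<lambda>a. (Src, NU a)) [0..<w]"
  have c1: "\<forall>d\<in>?E. \<forall>e\<in>?E. (Kc w d e :: 'a mat) \<in> carrier_mat 1 1 \<and> (snd d \<noteq> fst e \<longrightarrow> Kc w d e = 0\<^sub>m 1 1)"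
    by (auto simp: Kc_def zero_mat_def)
  have c2: "\<forall>e\<in>?E. (Fc w e :: 'a mat) \<in> carrier_mat (w * 1) 1" by (simp add: Fc_def)
  have Fcar: "\<forall>e\<in>set srcs. (Fc w e :: 'a mat) \<in> carrier_mat w 1" by (simp add: Fc_def)
  have c3: "distinct srcs \<and> set srcs = Out_edges ?E fst Src \<and> block_concat (w * 1) (Fc w :: _ \<Rightarrow> 'a mat) srcs = 1\<^sub>m (w * 1)"
  proof (intro conjI)
    show "distinct srcs" unfolding srcs_def by (simp add: distinct_map inj_on_def)
    show "set srcs = Out_edges ?E fst Src" unfolding srcs_def out_src by auto
    have bc: "block_concat w (Fc w :: _ \<Rightarrow> 'a mat) srcs \<in> carrier_mat w w"
      using bc_carrier[OF Fcar] unfolding srcs_def by simp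
    show "block_concat (w * 1) (Fc w :: _ \<Rightarrow> 'a mat) srcs = 1\<^sub>m (w * 1)"
    proof (rule eq_matI)
      fix i j assume "i < dim_row (1\<^sub>m (w * 1) :: 'a mat)" "j < dim_col (1\<^sub>m (w * 1) :: 'a mat)"
      then have i: "i < w" and j: "j < w" by auto
      have "block_concat w (Fc w :: _ \<Rightarrow> 'a mat) srcs $$ (i, j*1+0) = (Fc w (srcs!j) :: 'a mat) $$ (i, 0)"
        using bc_entry[OF Fcar, of j 0 i] i j unfolding srcs_def by simp
      also have "\<dots> = (1\<^sub>m w :: 'a mat) $$ (i, j)" using i j by (simp add: srcs_def Fc_def dl_def)
      finally show "block_concat (w * 1) (Fc w :: _ \<Rightarrow> 'a mat) srcs $$ (i, j) = (1\<^sub>m (w * 1) :: 'a mat) $$ (i, j)" by simp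
    qed (use bc in auto)
  qed
  have c4: "\<forall>e\<in>?E. fst e \<noteq> Src \<longrightarrow> (Fc w e :: 'a mat) = mat (w * 1) 1 (\<lambda>(i, j). \<Sum>d\<in>In_edges ?E snd (fst e). (Fc w d * Kc w d e) $$ (i, j))"
  proof (intro ballI impI)
    fix e assume "e \<in> ?E" "fst e \<noteq> Src"
    then show "(Fc w e :: 'a mat) = mat (w * 1) 1 (\<lambda>(i, j). \<Sum>d\<in>In_edges ?E snd (fst e). (Fc w d * Kc w d e) $$ (i, j))"
      using rec_A[of e w] w by simp
  qed
  have c5: "\<forall>t\<in>swirl_receivers w. \<exists>es. distinct es \<and> set es = In_edges ?E snd t \<and>
           vec_space.rank (w * 1) (block_concat (w * 1) (Fc w :: _ \<Rightarrow> 'a mat) es) = w * 1"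
    using rcv_A[OF _ w two three] unfolding swirl_receivers_def by auto
  have "is_vector_linear_solution ?E fst snd Src (swirl_receivers w) 1 (Kc w :: _ \<Rightarrow> _ \<Rightarrow> 'a mat) (Fc w)"
    unfolding is_vector_linear_solution_def Let_def out_src_card
    using c1 c2 c3 c4 c5 by blast
  then have "\<exists>(K :: snode \<times> snode \<Rightarrow> snode \<times> snode \<Rightarrow> 'a mat) F. is_vector_linear_solution ?E fst snd Src (swirl_receivers w) 1 K F"
    by (intro exI)
  then show ?thesis unfolding swirl_vl_solvable_def vector_linear_solvable_def .
qed

lemma card_vec: "card (carrier_vec L :: 'a::finite vec set) = card (UNIV :: 'a set) ^ L"
proof -
  have bij: "bij_betw (\<lambda>v. restrict (\<lambda>i. v $ i) {..<L}) (carrier_vec L :: 'a vec set) (PiE {..<L} (\<lambda>_. UNIV))"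
  proof (rule bij_betwI[where g = "\<lambda>f. vec L f"])
    show "(\<lambda>v. restrict (\<lambda>i. v $ i) {..<L}) \<in> (carrier_vec L :: 'a vec set) \<rightarrow> PiE {..<L} (\<lambda>_. UNIV)" by auto
    show "(\<lambda>f. vec L f) \<in> PiE {..<L} (\<lambda>_. UNIV) \<rightarrow> (carrier_vec L :: 'a vec set)" by auto
    show "vec L (restrict (\<lambda>i. x $ i) {..<L}) = x" if "x \<in> (carrier_vec L :: 'a vec set)" for x
      using that by (intro eq_vecI) auto
    show "restrict (\<lambda>i. vec L y $ i) {..<L} = y" if "y \<in> PiE {..<L} (\<lambda>_. (UNIV :: 'a set))" for y
    proof (rule ext)
      fix i
      show "restrict (\<lambda>i. vec L y $ i) {..<L} i = y i"
      proof (cases "i < L")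
        case True then show ?thesis by simp
      next
        case False then show ?thesis using that by (simp add: PiE_def extensional_def)
      qed
    qed
  qed
  have "card (carrier_vec L :: 'a vec set) = card (PiE {..<L} (\<lambda>_. (UNIV :: 'a set)))"
    using bij_betw_same_card[OF bij] .
  also have "\<dots> = card (UNIV :: 'a set) ^ L" by (simp add: card_PiE)
  finally show ?thesis .
qed

lemma finite_vec: "finite (carrier_vec L :: 'a::finite vec set)"
proof -
  have "carrier_vec L \<subseteq> (\<lambda>f. vec L f) ` (PiE {..<L} (\<lambda>_. (UNIV :: 'a set)))"
  proof
    fix v :: "'a vec" assume "v \<in> carrier_vec L"
    then have eq: "v = vec L (restrict (\<lambda>i. v $ i) {..<L})" by (intro eq_vecI) auto
    have r: "restrict (\<lambda>i. v $ i) {..<L} \<in> PiE {..<L} (\<lambda>_. (UNIV :: 'a set))" by simp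
    show "v \<in> (\<lambda>f. vec L f) ` (PiE {..<L} (\<lambda>_. (UNIV :: 'a set)))"
      using image_eqI[where f="vec L", OF eq r] .
  qed
  then show ?thesis by (rule finite_subset) (simp add: finite_PiE)
qed

context
  fixes L :: nat
  assumes c2: "(1::'c::{field,finite}) + 1 = 0"
begin

lemma c2x: "(x::'c) + x = 0"
proof -
  have "x + x = x * (1 + 1)" by (simp add: algebra_simps)
  then show ?thesis using c2 by simp
qed

lemma v2: "(x::'c vec) \<in> carrier_vec L \<Longrightarrow> x + x = 0\<^sub>v L"
  by (intro eq_vecI) (auto simp: c2x)

lemma v2eq: "(x::'c vec) \<in> carrier_vec L \<Longrightarrow> y \<in> carrier_vec L \<Longrightarrow> x + y = 0\<^sub>v L \<Longrightarrow> x = y"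
proof -
  assume x: "x \<in> carrier_vec L" and y: "y \<in> carrier_vec L" and h: "x + y = 0\<^sub>v L"
  show "x = y"
  proof (rule eq_vecI)
    fix i assume "i < dim_vec y"
    then have i: "i < L" using y by simp
    have "(x + y) $ i = 0" using h i by simp
    then have "x $ i + y $ i = 0" using i x y by simp
    then have "x $ i = - (y $ i)" by (simp add: eq_neg_iff_add_eq_0)
    also have "- (y $ i) = y $ i" using c2x[of "y $ i"] by (simp add: eq_neg_iff_add_eq_0)
    finally show "x $ i = y $ i" .
  qed (use x y in simp)
qed

end

definition goodpair :: "nat \<Rightarrow> ('c::field vec \<Rightarrow> 'c vec) \<Rightarrow> ('c vec \<Rightarrow> 'c vec) \<Rightarrow> bool" where
  "goodpair L f0 f1 \<longleftrightarrow> (\<forall>x\<in>carrier_vec L. f0 x \<in> carrier_vec L \<and> f1 x \<in> carrier_vec L) \<and>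
   (\<forall>x\<in>carrier_vec L. \<forall>y\<in>carrier_vec L. f0 (x+y) = f0 x + f0 y \<and> f1 (x+y) = f1 x + f1 y) \<and>
   (\<forall>x\<in>carrier_vec L. f0 x = 0\<^sub>v L \<longrightarrow> x = 0\<^sub>v L) \<and> (\<forall>x\<in>carrier_vec L. f1 x = 0\<^sub>v L \<longrightarrow> x = 0\<^sub>v L) \<and>
   (\<forall>x\<in>carrier_vec L. x \<noteq> 0\<^sub>v L \<longrightarrow> f0 x \<noteq> f1 x)"

lemma gp_sym:
  fixes f0 f1 :: "'c::field vec \<Rightarrow> 'c vec"
  assumes g: "goodpair L f0 f1" shows "goodpair L f1 f0"
proof -
  have d: "\<forall>x\<in>carrier_vec L. x \<noteq> 0\<^sub>v L \<longrightarrow> f1 x \<noteq> f0 x"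
  proof (intro ballI impI)
    fix x :: "'c vec" assume "x \<in> carrier_vec L" "x \<noteq> 0\<^sub>v L"
    then have "f0 x \<noteq> f1 x" using g unfolding goodpair_def by blast
    then show "f1 x \<noteq> f0 x" by simp
  qed
  show ?thesis using g d unfolding goodpair_def by blast
qed

primrec fwd :: "(nat \<Rightarrow> bool \<Rightarrow> 'v \<Rightarrow> 'v) \<Rightarrow> 'v \<Rightarrow> nat \<Rightarrow> 'v set" where
  "fwd f x0 0 = {x0}"
| "fwd f x0 (Suc k) = f k True ` fwd f x0 k \<union> f k False ` fwd f x0 k"

primrec bwd :: "(nat \<Rightarrow> bool \<Rightarrow> 'v \<Rightarrow> 'v) \<Rightarrow> 'v set \<Rightarrow> nat \<Rightarrow> 'v \<Rightarrow> nat \<Rightarrow> 'v set" where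
  "bwd f Z w y0 0 = {y0}"
| "bwd f Z w y0 (Suc m) = {z \<in> Z. f (w - Suc m) True z \<in> bwd f Z w y0 m \<or> f (w - Suc m) False z \<in> bwd f Z w y0 m}"

lemma fwd_walk: "y \<in> fwd f x0 k \<Longrightarrow> \<exists>xs bs. xs 0 = x0 \<and> xs k = y \<and> (\<forall>j<k. xs (Suc j) = f j (bs j) (xs j))"
proof (induction k arbitrary: y)
  case 0 then show ?case by (intro exI[of _ "\<lambda>_. x0"]) simp
next
  case (Suc k)
  then obtain z b where z: "z \<in> fwd f x0 k" "y = f k b z" by auto
  obtain xs bs where w: "xs 0 = x0" "xs k = z" "\<forall>j<k. xs (Suc j) = f j (bs j) (xs j)"
    using Suc.IH[OF z(1)] by blast
  show ?case
    apply (rule exI[of _ "xs(Suc k := y)"], rule exI[of _ "bs(k := b)"])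
    using w z by (auto simp: less_Suc_eq)
qed

lemma bwd_walk: "z \<in> bwd f Z w y0 m \<Longrightarrow> m \<le> w \<Longrightarrow>
   \<exists>xs bs. xs (w - m) = z \<and> xs w = y0 \<and> (\<forall>j. w - m \<le> j \<and> j < w \<longrightarrow> xs (Suc j) = f j (bs j) (xs j))"
proof (induction m arbitrary: z)
  case 0 then show ?case by (intro exI[of _ "\<lambda>_. y0"]) auto
next
  case (Suc m)
  have zm: "z \<in> Z \<and> (f (w - Suc m) True z \<in> bwd f Z w y0 m \<or> f (w - Suc m) False z \<in> bwd f Z w y0 m)"
    using Suc.prems(1) by simp
  then obtain b where z: "z \<in> Z" "f (w - Suc m) b z \<in> bwd f Z w y0 m" by blast
  obtain xs bs where h: "xs (w - m) = f (w - Suc m) b z" "xs w = y0"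
    "\<forall>j. w - m \<le> j \<and> j < w \<longrightarrow> xs (Suc j) = f j (bs j) (xs j)"
    using Suc.IH[OF z(2)] Suc.prems by auto
  let ?i = "w - Suc m"
  have i: "?i < w" "Suc ?i = w - m" using Suc.prems by auto
  show ?case
  proof (rule exI[of _ "xs(?i := z)"], rule exI[of _ "bs(?i := b)"], intro conjI allI impI)
    show "(xs(?i := z)) (w - Suc m) = z" by simp
    have ne: "w \<noteq> ?i" using i(1) by linarith
    then show "(xs(?i := z)) w = y0" using h(2) by simp
    fix j assume j: "w - Suc m \<le> j \<and> j < w"
    show "(xs(?i := z)) (Suc j) = f j ((bs(?i := b)) j) ((xs(?i := z)) j)"
    proof (cases "j = ?i")
      case True then show ?thesis using h i by simp
    next
      case False
      then have "w - m \<le> j" using j by auto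
      then show ?thesis using h j False by auto
    qed
  qed
qed

context
  fixes L :: nat
  assumes c2: "(1::'c::{field,finite}) + 1 = 0"
    and card2: "card (UNIV :: 'c set) = 2"
    and L1: "L \<ge> 1" and L3: "L \<le> 3"
begin

definition Zs :: "'c vec set" where "Zs = carrier_vec L - {0\<^sub>v L}"

lemma finZ: "finite Zs" unfolding Zs_def using finite_vec by blast

lemma cardV: "card (carrier_vec L :: 'c vec set) = 2 ^ L" using card_vec card2 by metis

lemma cardZ: "card Zs = 2 ^ L - 1"
  unfolding Zs_def using cardV finite_vec by (simp add: card_Diff_singleton)

lemma Z_nonempty: "Zs \<noteq> {}"
proof -
  have "(2::nat) ^ L \<ge> 2 ^ 1" using L1 by (intro power_increasing) auto
  then have "card Zs \<ge> 1" using cardZ by simp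
  then show ?thesis by auto
qed

lemma gp_carrier: "goodpair L (f0::'c vec \<Rightarrow> 'c vec) f1 \<Longrightarrow> x \<in> carrier_vec L \<Longrightarrow> f0 x \<in> carrier_vec L"
  unfolding goodpair_def by blast

lemma gp_add: "goodpair L (f0::'c vec \<Rightarrow> 'c vec) f1 \<Longrightarrow> x \<in> carrier_vec L \<Longrightarrow> y \<in> carrier_vec L \<Longrightarrow> f0 (x + y) = f0 x + f0 y"
  unfolding goodpair_def by blast

lemma gp_zero: "goodpair L (f0::'c vec \<Rightarrow> 'c vec) f1 \<Longrightarrow> x \<in> carrier_vec L \<Longrightarrow> f0 x = 0\<^sub>v L \<Longrightarrow> x = 0\<^sub>v L"
  unfolding goodpair_def by blast

lemma gp_dist: "goodpair L (f0::'c vec \<Rightarrow> 'c vec) f1 \<Longrightarrow> x \<in> Zs \<Longrightarrow> f0 x \<noteq> f1 x"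
  unfolding goodpair_def Zs_def by blast

lemma gp_inj: "goodpair L (f0::'c vec \<Rightarrow> 'c vec) f1 \<Longrightarrow> inj_on f0 (carrier_vec L)"
proof (rule inj_onI)
  fix x y assume g: "goodpair L f0 f1" and x: "x \<in> carrier_vec L" and y: "y \<in> carrier_vec L" and e: "f0 x = f0 y"
  have "f0 (x + y) = f0 x + f0 y" using gp_add[OF g x y] .
  also have "\<dots> = 0\<^sub>v L" using e v2[OF c2 gp_carrier[OF g y]] by simp
  finally have "f0 (x + y) = 0\<^sub>v L" .
  then have "x + y = 0\<^sub>v L" using gp_zero[OF g, of "x + y"] x y by simp
  then show "x = y" using v2eq[OF c2 x y] by blast
qed

lemma gp_Z: "goodpair L (f0::'c vec \<Rightarrow> 'c vec) f1 \<Longrightarrow> f0 ` Zs = Zs"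
proof -
  assume g: "goodpair L f0 f1"
  have sub: "f0 ` Zs \<subseteq> Zs"
  proof
    fix u assume "u \<in> f0 ` Zs"
    then obtain x where x: "x \<in> Zs" "u = f0 x" by auto
    have "f0 x \<in> carrier_vec L" using gp_carrier[OF g] x unfolding Zs_def by blast
    moreover have "f0 x \<noteq> 0\<^sub>v L" using gp_zero[OF g] x unfolding Zs_def by blast
    ultimately show "u \<in> Zs" using x unfolding Zs_def by simp
  qed
  have "inj_on f0 Zs" using gp_inj[OF g] unfolding Zs_def by (rule inj_on_subset) blast
  then show ?thesis using endo_inj_surj[OF finZ sub] by blast
qed

lemma Zc: "x \<in> Zs \<Longrightarrow> x \<in> carrier_vec L" unfolding Zs_def by blast
lemma Znz: "x \<in> Zs \<Longrightarrow> x \<noteq> 0\<^sub>v L" unfolding Zs_def by blast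

lemma addZ: "x \<in> carrier_vec L \<Longrightarrow> y \<in> carrier_vec L \<Longrightarrow> x \<noteq> y \<Longrightarrow> x + y \<in> Zs"
  unfolding Zs_def using v2eq[OF c2] by auto

lemma vcomm: "(x::'c vec) \<in> carrier_vec L \<Longrightarrow> y \<in> carrier_vec L \<Longrightarrow> x + y = y + x"
  by (rule comm_add_vec)

lemma vassoc: "(x::'c vec) \<in> carrier_vec L \<Longrightarrow> y \<in> carrier_vec L \<Longrightarrow> z \<in> carrier_vec L \<Longrightarrow> x + y + z = x + (y + z)"
  by (rule assoc_add_vec)

lemma vcanc: "(x::'c vec) \<in> carrier_vec L \<Longrightarrow> y \<in> carrier_vec L \<Longrightarrow> x + (x + y) = y"
proof -
  assume x: "x \<in> carrier_vec L" and y: "y \<in> carrier_vec L"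
  have "x + (x + y) = (x + x) + y" using vassoc[OF x x y] by simp
  also have "\<dots> = y" using v2[OF c2 x] y by simp
  finally show ?thesis .
qed

lemma cyc3:
  assumes g: "goodpair L (f0::'c vec \<Rightarrow> 'c vec) f1" and xZ: "x \<in> Zs" and yZ: "y \<in> Zs" and zZ: "z \<in> Zs"
    and xy: "x \<noteq> y" and yz: "y \<noteq> z" and xz: "x \<noteq> z"
    and e1: "f0 x = f1 y" and e2: "f0 y = f1 z" and e3: "f0 z = f1 x"
    and cz: "card Zs > 3"
  shows False
proof -
  have g1: "goodpair L f1 f0" using gp_sym[OF g] .
  have x: "x \<in> carrier_vec L" and y: "y \<in> carrier_vec L" and z: "z \<in> carrier_vec L"
    using xZ yZ zZ Zc by auto
  note add0 = gp_add[OF g] and add1 = gp_add[OF g1]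
  note car0 = gp_carrier[OF g] and car1 = gp_carrier[OF g1]
  show False
  proof (cases "x + y + z = 0\<^sub>v L")
    case False
    let ?s = "x + y + z"
    have sc: "?s \<in> carrier_vec L" using x y z by simp
    have "f0 ?s = f0 x + f0 y + f0 z" using add0[of "x+y" z] add0[of x y] x y z by simp
    also have "\<dots> = f1 y + f1 z + f1 x" using e1 e2 e3 by simp
    also have "\<dots> = f1 (y + z + x)" using add1[of "y+z" x] add1[of y z] x y z by simp
    also have "y + z + x = ?s"
    proof -
      have "y + z + x = x + (y + z)" by (rule vcomm) (use x y z in auto)
      then show ?thesis using vassoc[OF x y z] by simp
    qed
    finally have "f0 ?s = f1 ?s" .
    moreover have "?s \<in> Zs" using sc False unfolding Zs_def by blast
    ultimately show False using gp_dist[OF g] by blast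
  next
    case True
    have zxy: "z = x + y" using v2eq[OF c2 _ z True] x y by simp
    have L3': "L = 3"
    proof -
      have "L = 1 \<or> L = 2 \<or> L = 3" using L1 L3 by auto
      then show ?thesis using cz cardZ by auto
    qed
    have cV: "card (carrier_vec L :: 'c vec set) = 8" using cardV L3' by simp
    define W where "W = {0\<^sub>v L, x, y, z}"
    have x0: "x \<noteq> 0\<^sub>v L" and y0: "y \<noteq> 0\<^sub>v L" and z0: "z \<noteq> 0\<^sub>v L" using xZ yZ zZ Znz by auto
    have cW: "card W = 4" unfolding W_def using x0 y0 z0 xy yz xz by auto
    have WV: "W \<subseteq> carrier_vec L" unfolding W_def using x y z by auto
    have xz': "x + z = y" using zxy vcanc x y by simp
    have zx': "z + x = y" using xz' vcomm x z by metis
    have yz': "y + z = x" using zxy vcanc x y vcomm by metis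
    have zy': "z + y = x" using yz' vcomm y z by metis
    have xy': "x + y = z" using zxy by simp
    have yx': "y + x = z" using zxy vcomm x y by metis
    have clos: "u + u' \<in> W" if "u \<in> W" "u' \<in> W" for u u'
    proof -
      note ids = xz' zx' yz' zy' xy' yx' v2[OF c2 x] v2[OF c2 y] v2[OF c2 z]
      from that show ?thesis unfolding W_def
        by (elim insertE emptyE) (simp_all add: ids x y z)
    qed
    obtain w where w: "w \<in> carrier_vec L" "w \<notin> W"
    proof -
      have "\<not> carrier_vec L \<subseteq> W"
      proof
        assume "carrier_vec L \<subseteq> W"
        then have "card (carrier_vec L :: 'c vec set) \<le> card W" by (rule card_mono[rotated]) (simp add: W_def)
        then show False using cV cW by simp
      qed
      then show ?thesis using that by blast
    qed
    define W' where "W' = (\<lambda>u. w + u) ` W"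
    have injw: "inj_on (\<lambda>u. w + u) W"
    proof (rule inj_onI)
      fix u u' assume "u \<in> W" "u' \<in> W" "w + u = w + u'"
      then show "u = u'" using vcanc[of w u] vcanc[of w u'] w WV by (metis subsetD)
    qed
    have cW': "card W' = 4" unfolding W'_def using card_image[OF injw] cW by simp
    have disj: "W \<inter> W' = {}"
    proof (rule ccontr)
      assume "W \<inter> W' \<noteq> {}"
      then obtain u u' where u: "u \<in> W" "u' \<in> W" "w + u = u'" unfolding W'_def by auto
      have uc: "u \<in> carrier_vec L" using u WV by auto
      have "w = w + (u + u)" using v2[OF c2 uc] w by simp
      also have "\<dots> = (w + u) + u" using vassoc[OF w(1) uc uc] by simp
      also have "\<dots> = u' + u" using u by simp
      finally have "w \<in> W" using clos u by simp
      then show False using w by simp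
    qed
    have W'V: "W' \<subseteq> carrier_vec L" unfolding W'_def using WV w by auto
    have fin: "finite W" "finite W'" unfolding W_def W'_def by auto
    have "card (W \<union> W') = 8" using card_Un_disjoint[OF fin disj] cW cW' by simp
    then have VW: "W \<union> W' = carrier_vec L"
      by (intro card_subset_eq[OF finite_vec]) (use WV W'V cV in auto)
    have w0: "w \<noteq> 0\<^sub>v L" using w unfolding W_def by auto
    have wZ: "w \<in> Zs" using w w0 unfolding Zs_def by simp
    have "f0 w \<in> Zs" using gp_Z[OF g] wZ by blast
    then obtain w2 where w2: "w2 \<in> Zs" "f1 w2 = f0 w" using gp_Z[OF g1] by (metis imageE)
    have w2c: "w2 \<in> carrier_vec L" using w2 Zc by simp
    have inj0: "inj_on f0 (carrier_vec L)" using gp_inj[OF g] .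
    have fnew: False if v: "v \<in> carrier_vec L" "v \<notin> W" "f0 v = f1 v" for v
    proof -
      have "v \<noteq> 0\<^sub>v L" using v unfolding W_def by auto
      then show False using gp_dist[OF g, of v] v unfolding Zs_def by auto
    qed
    show False
    proof (cases "w2 \<in> W")
      case True
      then have "w2 = x \<or> w2 = y \<or> w2 = z" using w2 Znz unfolding W_def by auto
      moreover have "w2 \<noteq> x"
      proof
        assume "w2 = x"
        then have "f0 w = f0 z" using w2 e3 by simp
        then have "w = z" using inj_onD[OF inj0] w z by blast
        then show False using w unfolding W_def by simp
      qed
      moreover have "w2 \<noteq> y"
      proof
        assume "w2 = y"
        then have "f0 w = f0 x" using w2 e1 by simp
        then have "w = x" using inj_onD[OF inj0] w x by blast
        then show False using w unfolding W_def by simp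
      qed
      moreover have "w2 \<noteq> z"
      proof
        assume "w2 = z"
        then have "f0 w = f0 y" using w2 e2 by simp
        then have "w = y" using inj_onD[OF inj0] w y by blast
        then show False using w unfolding W_def by simp
      qed
      ultimately show False by blast
    next
      case False
      then have "w2 \<in> W'" using VW w2c by blast
      then obtain u where u: "u \<in> W" "w2 = w + u" unfolding W'_def by auto
      then have "u = 0\<^sub>v L \<or> u = x \<or> u = y \<or> u = z" unfolding W_def by auto
      moreover have "u \<noteq> 0\<^sub>v L"
      proof
        assume "u = 0\<^sub>v L"
        then have "w2 = w" using u w by simp
        then show False using fnew[of w] w w2 by simp
      qed
      moreover have "u \<noteq> x"
      proof
        assume ux: "u = x"
        let ?v = "w + y"
        have "f0 ?v = f0 w + f0 y" using add0 w y by simp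
        also have "\<dots> = f1 (w + x) + f1 z" using w2 u ux e2 by simp
        also have "\<dots> = f1 (w + x + z)" using add1[of "w + x" z] w x z by simp
        also have "w + x + z = ?v" using vassoc[OF w(1) x z] xz' by simp
        finally have "f0 ?v = f1 ?v" .
        moreover have "?v \<notin> W"
        proof -
          have "?v \<in> W'" unfolding W'_def W_def by auto
          then show ?thesis using disj by blast
        qed
        ultimately show False using fnew[of ?v] w y by simp
      qed
      moreover have "u \<noteq> y"
      proof
        assume uy: "u = y"
        let ?v = "w + z"
        have "f0 ?v = f0 w + f0 z" using add0 w z by simp
        also have "\<dots> = f1 (w + y) + f1 x" using w2 u uy e3 by simp
        also have "\<dots> = f1 (w + y + x)" using add1[of "w + y" x] w x y by simp
        also have "w + y + x = ?v" using vassoc[OF w(1) y x] yx' by simp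
        finally have "f0 ?v = f1 ?v" .
        moreover have "?v \<notin> W"
        proof -
          have "?v \<in> W'" unfolding W'_def W_def by auto
          then show ?thesis using disj by blast
        qed
        ultimately show False using fnew[of ?v] w z by simp
      qed
      moreover have "u \<noteq> z"
      proof
        assume uz: "u = z"
        let ?v = "w + x"
        have "f0 ?v = f0 w + f0 x" using add0 w x by simp
        also have "\<dots> = f1 (w + z) + f1 y" using w2 u uz e1 by simp
        also have "\<dots> = f1 (w + z + y)" using add1[of "w + z" y] w y z by simp
        also have "w + z + y = ?v" using vassoc[OF w(1) z y] zy' by simp
        finally have "f0 ?v = f1 ?v" .
        moreover have "?v \<notin> W"
        proof -
          have "?v \<in> W'" unfolding W'_def W_def by auto
          then show ?thesis using disj by blast
        qed
        ultimately show False using fnew[of ?v] w x by simp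
      qed
      ultimately show False by blast
    qed
  qed
qed


lemma noinv:
  assumes g: "goodpair L (f0::'c vec \<Rightarrow> 'c vec) f1" and S: "S \<subseteq> Zs" "S \<noteq> {}" "card S \<le> 3" "card S < card Zs"
    and eq: "f0 ` S = f1 ` S"
  shows False
proof -
  have finS: "finite S" using finZ S(1) finite_subset by blast
  have g1: "goodpair L f1 f0" using gp_sym[OF g] .
  have "card S \<noteq> 0" using finS S(2) by simp
  then have "card S = 1 \<or> card S = 2 \<or> card S = 3" using S(3) by auto
  then consider (c1) "card S = 1" | (c2) "card S = 2" | (c3) "card S = 3" by blast
  then show False
  proof cases
    case c1
    then obtain x where x: "S = {x}" by (rule card_1_singletonE)
    then have "f0 x = f1 x" using eq by simp
    moreover have "x \<in> Zs" using x S by auto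
    ultimately show False using gp_dist[OF g] by blast
  next
    case c2
    then obtain x y where xy: "S = {x, y}" "x \<noteq> y" by (auto simp: card_2_iff)
    have xZ: "x \<in> Zs" and yZ: "y \<in> Zs" using xy S by auto
    have x: "x \<in> carrier_vec L" and y: "y \<in> carrier_vec L" using xZ yZ Zc by auto
    have inj0: "inj_on f0 (carrier_vec L)" using gp_inj[OF g] .
    have dx: "f0 x \<noteq> f1 x" and dy: "f0 y \<noteq> f1 y" using gp_dist[OF g] xZ yZ by auto
    have "f0 x \<in> f1 ` S" using eq xy by blast
    then have ex: "f0 x = f1 y" using dx xy by auto
    have "f0 y \<in> f1 ` S" using eq xy by blast
    then have ey: "f0 y = f1 x" using dy xy by auto
    have sZ: "x + y \<in> Zs" using addZ x y xy(2) by blast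
    have "f0 (x + y) = f0 x + f0 y" using gp_add[OF g x y] .
    also have "\<dots> = f1 y + f1 x" using ex ey by simp
    also have "\<dots> = f1 (y + x)" using gp_add[OF g1 y x] by simp
    also have "y + x = x + y" using vcomm[OF y x] .
    finally show False using gp_dist[OF g sZ] by blast
  next
    case c3
    then obtain x y z where xyz: "S = {x, y, z}" "x \<noteq> y" "y \<noteq> z" "x \<noteq> z" by (auto simp: card_3_iff)
    have xZ: "x \<in> Zs" and yZ: "y \<in> Zs" and zZ: "z \<in> Zs" using xyz S by auto
    have x: "x \<in> carrier_vec L" and y: "y \<in> carrier_vec L" and z: "z \<in> carrier_vec L" using xZ yZ zZ Zc by auto
    have cz: "card Zs > 3" using S c3 by simp
    have inj0: "inj_on f0 (carrier_vec L)" using gp_inj[OF g] .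
    have n01: "f0 x \<noteq> f0 y" using inj_onD[OF inj0 _ x y] xyz by blast
    have n02: "f0 x \<noteq> f0 z" using inj_onD[OF inj0 _ x z] xyz by blast
    have n12: "f0 y \<noteq> f0 z" using inj_onD[OF inj0 _ y z] xyz by blast
    have dx: "f0 x \<noteq> f1 x" and dy: "f0 y \<noteq> f1 y" and dz: "f0 z \<noteq> f1 z" using gp_dist[OF g] xZ yZ zZ by auto
    have "f0 x \<in> f1 ` {x, y, z}" using eq xyz(1) by blast
    then have mx: "f0 x = f1 y \<or> f0 x = f1 z" using dx by auto
    have "f0 y \<in> f1 ` {x, y, z}" using eq xyz(1) by blast
    then have my: "f0 y = f1 x \<or> f0 y = f1 z" using dy by auto
    have "f0 z \<in> f1 ` {x, y, z}" using eq xyz(1) by blast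
    then have mz: "f0 z = f1 x \<or> f0 z = f1 y" using dz by auto
    have cA: False if "f0 x = f1 y" "f0 y = f1 z" "f0 z = f1 x"
      using cyc3[OF g xZ yZ zZ xyz(2,3,4) that cz] .
    have cB: False if "f0 x = f1 z" "f0 z = f1 y" "f0 y = f1 x"
      using cyc3[OF g xZ zZ yZ xyz(4) xyz(3)[symmetric] xyz(2) that cz] .
    show False using mx my mz by (elim disjE) (metis cA cB n01 n02 n12)+
  qed
qed

lemma grow_f:
  assumes g: "goodpair L (f0::'c vec \<Rightarrow> 'c vec) f1" and A: "A \<subseteq> Zs" "A \<noteq> {}"
  shows "f0 ` A \<union> f1 ` A \<subseteq> Zs" "card (f0 ` A \<union> f1 ` A) \<ge> min (card A + 1) (min 4 (card Zs))"
proof -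
  have g1: "goodpair L f1 f0" using gp_sym[OF g] .
  show sub: "f0 ` A \<union> f1 ` A \<subseteq> Zs" using A(1) gp_Z[OF g] gp_Z[OF g1] by blast
  have finA: "finite A" using finZ A(1) finite_subset by blast
  have AV: "A \<subseteq> carrier_vec L" using A(1) Zc by blast
  have c0: "card (f0 ` A) = card A" using card_image[OF inj_on_subset[OF gp_inj[OF g] AV]] .
  have c1: "card (f1 ` A) = card A" using card_image[OF inj_on_subset[OF gp_inj[OF g1] AV]] .
  have finU: "finite (f0 ` A \<union> f1 ` A)" using finA by simp
  have ge: "card (f0 ` A \<union> f1 ` A) \<ge> card A" using card_mono[OF finU, of "f0 ` A"] c0 by simp
  show "card (f0 ` A \<union> f1 ` A) \<ge> min (card A + 1) (min 4 (card Zs))"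
  proof (cases "card A \<ge> min 4 (card Zs)")
    case True then show ?thesis using ge by linarith
  next
    case False
    have "f0 ` A \<noteq> f1 ` A"
    proof
      assume "f0 ` A = f1 ` A"
      then show False using noinv[OF g A] False by linarith
    qed
    moreover have "f1 ` A \<subseteq> f0 ` A \<Longrightarrow> f1 ` A = f0 ` A"
      using card_subset_eq[of "f0 ` A" "f1 ` A"] finA c0 c1 by simp
    ultimately have "\<not> f1 ` A \<subseteq> f0 ` A" by auto
    then have "f0 ` A \<subset> f0 ` A \<union> f1 ` A" by auto
    then have "card (f0 ` A) < card (f0 ` A \<union> f1 ` A)" using psubset_card_mono[OF finU] by blast
    then show ?thesis using c0 by linarith
  qed
qed

lemma grow_b:
  assumes g: "goodpair L (f0::'c vec \<Rightarrow> 'c vec) f1" and B: "B \<subseteq> Zs" "B \<noteq> {}"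
  shows "{y\<in>Zs. f0 y \<in> B \<or> f1 y \<in> B} \<subseteq> Zs" "{y\<in>Zs. f0 y \<in> B \<or> f1 y \<in> B} \<noteq> {}"
    "card {y\<in>Zs. f0 y \<in> B \<or> f1 y \<in> B} \<ge> min (card B + 1) (min 4 (card Zs))"
proof -
  have g1: "goodpair L f1 f0" using gp_sym[OF g] .
  define P0 where "P0 = {y\<in>Zs. f0 y \<in> B}"
  define P1 where "P1 = {y\<in>Zs. f1 y \<in> B}"
  have PU: "{y\<in>Zs. f0 y \<in> B \<or> f1 y \<in> B} = P0 \<union> P1" unfolding P0_def P1_def by auto
  show "{y\<in>Zs. f0 y \<in> B \<or> f1 y \<in> B} \<subseteq> Zs" by auto
  have im0: "f0 ` P0 = B"
  proof
    show "f0 ` P0 \<subseteq> B" unfolding P0_def by auto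
    show "B \<subseteq> f0 ` P0"
    proof
      fix b assume "b \<in> B"
      then have "b \<in> f0 ` Zs" using B(1) gp_Z[OF g] by blast
      then obtain y where "y \<in> Zs" "b = f0 y" by auto
      then show "b \<in> f0 ` P0" using \<open>b \<in> B\<close> unfolding P0_def by auto
    qed
  qed
  have im1: "f1 ` P1 = B"
  proof
    show "f1 ` P1 \<subseteq> B" unfolding P1_def by auto
    show "B \<subseteq> f1 ` P1"
    proof
      fix b assume "b \<in> B"
      then have "b \<in> f1 ` Zs" using B(1) gp_Z[OF g1] by blast
      then obtain y where "y \<in> Zs" "b = f1 y" by auto
      then show "b \<in> f1 ` P1" using \<open>b \<in> B\<close> unfolding P1_def by auto
    qed
  qed
  have P0V: "P0 \<subseteq> carrier_vec L" and P1V: "P1 \<subseteq> carrier_vec L" unfolding P0_def P1_def using Zc by auto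
  have c0: "card P0 = card B" using card_image[OF inj_on_subset[OF gp_inj[OF g] P0V]] im0 by simp
  have c1: "card P1 = card B" using card_image[OF inj_on_subset[OF gp_inj[OF g1] P1V]] im1 by simp
  have finB: "finite B" using finZ B(1) finite_subset by blast
  have fin0: "finite P0" and fin1: "finite P1" unfolding P0_def P1_def using finZ by auto
  have B0: "card B > 0" using finB B(2) by (simp add: card_gt_0_iff)
  show "{y\<in>Zs. f0 y \<in> B \<or> f1 y \<in> B} \<noteq> {}" unfolding PU using c0 B0 by auto
  have finU: "finite (P0 \<union> P1)" using fin0 fin1 by simp
  have ge: "card (P0 \<union> P1) \<ge> card B" using card_mono[OF finU, of P0] c0 by simp
  show "card {y\<in>Zs. f0 y \<in> B \<or> f1 y \<in> B} \<ge> min (card B + 1) (min 4 (card Zs))"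
    unfolding PU
  proof (cases "card B \<ge> min 4 (card Zs)")
    case True then show "card (P0 \<union> P1) \<ge> min (card B + 1) (min 4 (card Zs))" using ge by linarith
  next
    case False
    have "P0 \<noteq> P1"
    proof
      assume e: "P0 = P1"
      have "P0 \<subseteq> Zs" unfolding P0_def by auto
      moreover have "P0 \<noteq> {}" using c0 B0 by auto
      moreover have "f0 ` P0 = f1 ` P0" using im0 im1 e by simp
      moreover have "card P0 \<le> 3" "card P0 < card Zs" using False c0 by auto
      ultimately show False using noinv[OF g] by blast
    qed
    moreover have "P1 \<subseteq> P0 \<Longrightarrow> P1 = P0"
      using card_subset_eq[OF fin0] c0 c1 by simp
    ultimately have "\<not> P1 \<subseteq> P0" by auto
    then have "P0 \<subset> P0 \<union> P1" by auto
    then have "card P0 < card (P0 \<union> P1)" using psubset_card_mono[OF finU] by blast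
    then show "card (P0 \<union> P1) \<ge> min (card B + 1) (min 4 (card Zs))" using c0 by linarith
  qed
qed


lemma minlem: "(a::nat) \<ge> min s M \<Longrightarrow> c \<ge> min (a+1) M \<Longrightarrow> c \<ge> min (Suc s) M"
  by (simp add: min_def split: if_split_asm)

lemma fwd_card:
  assumes g: "\<forall>j<k. goodpair L (f j True :: 'c vec \<Rightarrow> 'c vec) (f j False)" and x0: "x0 \<in> Zs"
  shows "fwd f x0 k \<subseteq> Zs \<and> fwd f x0 k \<noteq> {} \<and> card (fwd f x0 k) \<ge> min (Suc k) (min 4 (card Zs))"
  using g
proof (induction k)
  case 0 then show ?case using x0 by simp
next
  case (Suc k)
  then have IH: "fwd f x0 k \<subseteq> Zs \<and> fwd f x0 k \<noteq> {} \<and> card (fwd f x0 k) \<ge> min (Suc k) (min 4 (card Zs))" by simp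
  have gk: "goodpair L (f k True) (f k False)" using Suc.prems by simp
  note G = grow_f[OF gk, of "fwd f x0 k"]
  have "fwd f x0 (Suc k) = f k True ` fwd f x0 k \<union> f k False ` fwd f x0 k" by simp
  then show ?case using G IH minlem[of "Suc k" _ "card (fwd f x0 k)"] by auto
qed

lemma bwd_card:
  assumes g: "\<forall>j<w. goodpair L (f j True :: 'c vec \<Rightarrow> 'c vec) (f j False)" and y0: "y0 \<in> Zs"
  shows "m \<le> w \<Longrightarrow> bwd f Zs w y0 m \<subseteq> Zs \<and> bwd f Zs w y0 m \<noteq> {} \<and> card (bwd f Zs w y0 m) \<ge> min (Suc m) (min 4 (card Zs))"
proof (induction m)
  case 0 then show ?case using y0 by simp
next
  case (Suc m)
  then have IH: "bwd f Zs w y0 m \<subseteq> Zs \<and> bwd f Zs w y0 m \<noteq> {} \<and> card (bwd f Zs w y0 m) \<ge> min (Suc m) (min 4 (card Zs))" by simp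
  have gk: "goodpair L (f (w - Suc m) True) (f (w - Suc m) False)" using g Suc.prems by simp
  note G = grow_b[OF gk, of "bwd f Zs w y0 m"]
  have "bwd f Zs w y0 (Suc m) = {z \<in> Zs. f (w - Suc m) True z \<in> bwd f Zs w y0 m \<or> f (w - Suc m) False z \<in> bwd f Zs w y0 m}" by simp
  then show ?case using G IH minlem[of "Suc m" _ "card (bwd f Zs w y0 m)"] by auto
qed

lemma walk:
  assumes g: "\<forall>j<w. goodpair L (f j True :: 'c vec \<Rightarrow> 'c vec) (f j False)" and w6: "w \<ge> 6"
  shows "\<exists>xs bs. xs 0 \<in> Zs \<and> (\<forall>j<w. xs (Suc j) = f j (bs j) (xs j)) \<and> xs w = xs 0"
proof -
  obtain x0 where x0: "x0 \<in> Zs" using Z_nonempty by blast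
  define A where "A = fwd f x0 3"
  define B where "B = bwd f Zs w x0 (w - 3)"
  have g3: "\<forall>j<3. goodpair L (f j True) (f j False)" using g w6 by simp
  have A: "A \<subseteq> Zs" "card A \<ge> min 4 (card Zs)"
    using fwd_card[OF g3 x0] unfolding A_def by (auto simp: numeral_eq_Suc)
  have B0: "B \<subseteq> Zs \<and> B \<noteq> {} \<and> card B \<ge> min (Suc (w - 3)) (min 4 (card Zs))"
    using bwd_card[OF g x0, of "w - 3"] unfolding B_def by simp
  have mm: "min (Suc (w - 3)) (min 4 (card Zs)) = min 4 (card Zs)"
  proof -
    have "min 4 (card Zs) \<le> (4::nat)" by simp
    also have "(4::nat) \<le> Suc (w - 3)" using w6 by linarith
    finally show ?thesis by (rule min_absorb2)
  qed
  have B: "B \<subseteq> Zs" "card B \<ge> min 4 (card Zs)" using B0 unfolding mm by auto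
  have M: "2 * min 4 (card Zs) > card Zs"
  proof -
    have "L = 1 \<or> L = 2 \<or> L = 3" using L1 L3 by auto
    then show ?thesis using cardZ by auto
  qed
  have "A \<inter> B \<noteq> {}"
  proof
    assume d: "A \<inter> B = {}"
    have fA: "finite A" and fB: "finite B" using A(1) B(1) finZ finite_subset by auto
    have "card (A \<union> B) = card A + card B" using card_Un_disjoint[OF fA fB d] .
    moreover have "card (A \<union> B) \<le> card Zs" using card_mono[OF finZ] A(1) B(1) by simp
    ultimately show False using A(2) B(2) M by linarith
  qed
  then obtain y where yA: "y \<in> A" and yB: "y \<in> B" by blast
  obtain xs1 bs1 where w1: "xs1 0 = x0" "xs1 3 = y" "\<forall>j<3. xs1 (Suc j) = f j (bs1 j) (xs1 j)"
    using fwd_walk[OF yA[unfolded A_def]] by blast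
  have wm: "w - (w - 3) = 3" using w6 by simp
  obtain xs2 bs2 where w2: "xs2 3 = y" "xs2 w = x0" "\<forall>j. 3 \<le> j \<and> j < w \<longrightarrow> xs2 (Suc j) = f j (bs2 j) (xs2 j)"
    using bwd_walk[OF yB[unfolded B_def]] w6 unfolding wm by auto
  define xs where "xs j = (if j \<le> 3 then xs1 j else xs2 j)" for j
  define bs where "bs j = (if j < 3 then bs1 j else bs2 j)" for j
  have "xs 0 \<in> Zs" using x0 w1 unfolding xs_def by simp
  moreover have "xs w = xs 0" using w1 w2 w6 unfolding xs_def by simp
  moreover have "\<forall>j<w. xs (Suc j) = f j (bs j) (xs j)"
  proof (intro allI impI)
    fix j assume j: "j < w"
    show "xs (Suc j) = f j (bs j) (xs j)"
    proof (cases "j < 3")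
      case True then show ?thesis using w1 unfolding xs_def bs_def by simp
    next
      case False
      then have "xs j = xs2 j" using w1 w2 unfolding xs_def by (cases "j = 3") auto
      then show ?thesis using w2 False j unfolding xs_def bs_def by simp
    qed
  qed
  ultimately show ?thesis by blast
qed

end

definition rv :: "'a::field vec \<Rightarrow> 'a mat \<Rightarrow> 'a vec" where "rv \<phi> X = transpose_mat X *\<^sub>v \<phi>"

lemma rv_carrier: "X \<in> carrier_mat m k \<Longrightarrow> rv \<phi> X \<in> carrier_vec k"
  unfolding rv_def by (simp add: carrier_vecI)

lemma rv_mult: "X \<in> carrier_mat m n1 \<Longrightarrow> M \<in> carrier_mat n1 n2 \<Longrightarrow> \<phi> \<in> carrier_vec m \<Longrightarrow>
   rv \<phi> (X * M) = rv (rv \<phi> X) M"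
  unfolding rv_def by (simp add: transpose_mult[of X m n1 M n2] assoc_mult_mat_vec[of _ n2 n1 _ m])

lemma rv_add: "X \<in> carrier_mat m k \<Longrightarrow> Y \<in> carrier_mat m k \<Longrightarrow> \<phi> \<in> carrier_vec m \<Longrightarrow>
   rv \<phi> (X + Y) = rv \<phi> X + rv \<phi> Y"
  unfolding rv_def by (simp add: transpose_add add_mult_distrib_mat_vec[of _ k m])

lemma rv_vadd: "M \<in> carrier_mat m k \<Longrightarrow> x \<in> carrier_vec m \<Longrightarrow> y \<in> carrier_vec m \<Longrightarrow>
   rv (x + y) M = rv x M + rv y M"
  unfolding rv_def by (simp add: mult_add_distrib_mat_vec[of _ k m])

lemma rv_zero: "M \<in> carrier_mat m k \<Longrightarrow> rv (0\<^sub>v m) M = 0\<^sub>v k"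
  unfolding rv_def by (intro eq_vecI) auto

lemma col_rv: "X \<in> carrier_mat m k \<Longrightarrow> \<phi> \<in> carrier_vec m \<Longrightarrow> c < k \<Longrightarrow> col X c \<bullet> \<phi> = rv \<phi> X $ c"
  unfolding rv_def by simp

definition bk :: "nat \<Rightarrow> 'a vec \<Rightarrow> nat \<Rightarrow> 'a vec" where "bk L \<phi> p = vec L (\<lambda>k. \<phi> $ (p*L + k))"

lemma idx_lt: "p < w \<Longrightarrow> k < L \<Longrightarrow> p * L + k < w * (L::nat)"
proof -
  assume "p < w" "k < L"
  then have "p * L + k < p * L + L" by simp
  also have "\<dots> = Suc p * L" by simp
  also have "\<dots> \<le> w * L" using \<open>p < w\<close> by (intro mult_le_mono1) simp
  finally show ?thesis .
qed

locale swsol =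
  fixes w L :: nat and K :: "snode\<times>snode \<Rightarrow> snode\<times>snode \<Rightarrow> 'c::field mat" and F :: "snode\<times>snode \<Rightarrow> 'c mat"
    and srcs :: "(snode\<times>snode) list"
  assumes w6: "w \<ge> 6" and L1: "L \<ge> 1"
    and Kc: "\<forall>d\<in>swirl_edges w. \<forall>e\<in>swirl_edges w. K d e \<in> carrier_mat L L"
    and Fc: "\<forall>e\<in>swirl_edges w. F e \<in> carrier_mat (w*L) L"
    and sd: "distinct srcs" and ss: "set srcs = Out_edges (swirl_edges w) fst Src"
    and sI: "block_concat (w*L) F srcs = 1\<^sub>m (w*L)"
    and rec: "\<forall>e\<in>swirl_edges w. fst e \<noteq> Src \<longrightarrow> F e = mat (w*L) L (\<lambda>(i,j). \<Sum>d\<in>In_edges (swirl_edges w) snd (fst e). (F d * K d e) $$ (i,j))"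
    and rcv: "\<forall>t\<in>swirl_receivers w. \<exists>es. distinct es \<and> set es = In_edges (swirl_edges w) snd t \<and> vec_space.rank (w*L) (block_concat (w*L) F es) = w*L"
begin

abbreviation "E \<equiv> swirl_edges w"
abbreviation "n \<equiv> w * L"

definition nd :: "nat \<Rightarrow> nat" where "nd p = (case snd (srcs ! p) of NU a \<Rightarrow> a | _ \<Rightarrow> 0)"

lemma len_srcs: "length srcs = w"
  using distinct_card[OF sd] ss out_src_card by simp

lemma srcs_nth: "p < w \<Longrightarrow> srcs ! p = (Src, NU (nd p)) \<and> nd p < w"
proof -
  assume p: "p < w"
  then have "srcs ! p \<in> set srcs" using len_srcs by simp
  then obtain a where "a < w" "srcs ! p = (Src, NU a)" using ss out_src by auto
  then show ?thesis unfolding nd_def by simp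
qed

lemma nd_bij: "bij_betw nd {..<w} {..<w}"
proof -
  have inj: "inj_on nd {..<w}"
  proof (rule inj_onI)
    fix p q assume "p \<in> {..<w}" "q \<in> {..<w}" "nd p = nd q"
    then have "srcs ! p = srcs ! q" using srcs_nth by force
    then show "p = q" using nth_eq_iff_index_eq[OF sd] len_srcs \<open>p \<in> {..<w}\<close> \<open>q \<in> {..<w}\<close> by auto
  qed
  have sub: "nd ` {..<w} \<subseteq> {..<w}" using srcs_nth by auto
  show ?thesis using inj endo_inj_surj[OF finite_lessThan sub inj] by (simp add: bij_betw_def)
qed

definition pos :: "nat \<Rightarrow> nat" where "pos = inv_into {..<w} nd"

lemma pos: "a < w \<Longrightarrow> pos a < w \<and> nd (pos a) = a \<and> srcs ! pos a = (Src, NU a)"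
proof -
  assume a: "a < w"
  have "a \<in> nd ` {..<w}" using nd_bij a by (simp add: bij_betw_def)
  then have "pos a \<in> {..<w}" "nd (pos a) = a" unfolding pos_def
    by (rule inv_into_into, rule f_inv_into_f)
  then have "pos a < w" "nd (pos a) = a" by auto
  then show ?thesis using srcs_nth by auto
qed

lemma srcsE: "e \<in> set srcs \<Longrightarrow> e \<in> E"
  using ss unfolding Out_edges_def by auto

lemma F_src: "a < w \<Longrightarrow> i < n \<Longrightarrow> k < L \<Longrightarrow> F (Src, NU a) $$ (i,k) = (if i = pos a * L + k then 1 else 0)"
proof -
  assume a: "a < w" and i: "i < n" and k: "k < L"
  have Fs: "\<forall>e\<in>set srcs. F e \<in> carrier_mat n L" using Fc srcsE by blast
  have p: "pos a < length srcs" using pos[OF a] len_srcs by simp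
  have "block_concat n F srcs $$ (i, pos a * L + k) = F (srcs ! pos a) $$ (i, k)"
    using bc_entry[OF Fs p k i] .
  moreover have "pos a * L + k < n" using idx_lt pos[OF a] k by blast
  ultimately show ?thesis using sI pos[OF a] i by simp
qed

lemma EU: "a < w \<Longrightarrow> (Src, NU a) \<in> E" unfolding swirl_edges_iff by auto

lemma rv_src: "a < w \<Longrightarrow> \<phi> \<in> carrier_vec n \<Longrightarrow> rv \<phi> (F (Src, NU a)) = bk L \<phi> (pos a)"
proof -
  assume a: "a < w" and \<phi>: "\<phi> \<in> carrier_vec n"
  have Fa: "F (Src, NU a) \<in> carrier_mat n L" using Fc EU[OF a] by blast
  show ?thesis
  proof (rule eq_vecI)
    show "dim_vec (rv \<phi> (F (Src, NU a))) = dim_vec (bk L \<phi> (pos a))"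
      using rv_carrier[OF Fa] by (simp add: bk_def)
    fix k assume "k < dim_vec (bk L \<phi> (pos a))"
    then have k: "k < L" by (simp add: bk_def)
    have "rv \<phi> (F (Src, NU a)) $ k = col (F (Src, NU a)) k \<bullet> \<phi>" using col_rv[OF Fa \<phi> k] by simp
    also have "\<dots> = (\<Sum>i<n. (if i = pos a * L + k then 1 else 0) * \<phi> $ i)"
      using Fa \<phi> k F_src[OF a _ k] by (simp add: scalar_prod_def lessThan_atLeast0)
    also have "\<dots> = (\<Sum>i<n. (if i = pos a * L + k then \<phi> $ (pos a * L + k) else 0))"
      by (rule sum.cong) auto
    also have "\<dots> = \<phi> $ (pos a * L + k)" using idx_lt pos[OF a] k by simp
    finally show "rv \<phi> (F (Src, NU a)) $ k = bk L \<phi> (pos a) $ k" using k by (simp add: bk_def)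
  qed
qed


lemma E_UV1: "j < w \<Longrightarrow> (NU j, NV j) \<in> E" unfolding swirl_edges_iff by auto
lemma E_UV2: "j < w \<Longrightarrow> (NU (Suc j mod w), NV j) \<in> E" unfolding swirl_edges_iff by auto
lemma E_VW: "j < w \<Longrightarrow> (NV j, NW j b) \<in> E" unfolding swirl_edges_iff by auto
lemma E_WR: "N \<in> swirl_receiver_sets w \<Longrightarrow> (j, b) \<in> N \<Longrightarrow> (NW j b, NR N) \<in> E" unfolding swirl_edges_iff by auto

lemma mat_self: "M \<in> carrier_mat n L \<Longrightarrow> mat n L (\<lambda>(i,j). M $$ (i,j)) = M"
  by (intro eq_matI) auto

lemma mat_add_self: "X \<in> carrier_mat n L \<Longrightarrow> Y \<in> carrier_mat n L \<Longrightarrow>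
   mat n L (\<lambda>(i,j). X $$ (i,j) + Y $$ (i,j)) = X + Y"
  by (intro eq_matI) auto

lemma F_U: "a < w \<Longrightarrow> (NU a, NV j) \<in> E \<Longrightarrow> F (NU a, NV j) = F (Src, NU a) * K (Src, NU a) (NU a, NV j)"
proof -
  assume a: "a < w" and e: "(NU a, NV j) \<in> E"
  have "F (NU a, NV j) = mat n L (\<lambda>(i,j'). (F (Src, NU a) * K (Src, NU a) (NU a, NV j)) $$ (i,j'))"
    using rec e in_NU[OF a] by simp
  also have "\<dots> = F (Src, NU a) * K (Src, NU a) (NU a, NV j)"
    using Fc Kc EU[OF a] e by (intro mat_self mult_carrier_mat) blast+
  finally show ?thesis .
qed

lemma F_V: "j < w \<Longrightarrow> F (NV j, NW j b) = F (NU j, NV j) * K (NU j, NV j) (NV j, NW j b) +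
     F (NU (Suc j mod w), NV j) * K (NU (Suc j mod w), NV j) (NV j, NW j b)"
proof -
  assume j: "j < w"
  let ?d1 = "(NU j, NV j)" and ?d2 = "(NU (Suc j mod w), NV j)" and ?e = "(NV j, NW j b)"
  have neq: "?d1 \<noteq> ?d2" using j w6 by (simp add: smod)
  have c1: "F ?d1 * K ?d1 ?e \<in> carrier_mat n L" using Fc Kc E_UV1[OF j] E_VW[OF j] by (intro mult_carrier_mat) blast+
  have c2: "F ?d2 * K ?d2 ?e \<in> carrier_mat n L" using Fc Kc E_UV2[OF j] E_VW[OF j] by (intro mult_carrier_mat) blast+
  have "F ?e = mat n L (\<lambda>(i,j'). (F ?d1 * K ?d1 ?e) $$ (i,j') + (F ?d2 * K ?d2 ?e) $$ (i,j'))"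
    using rec E_VW[OF j] in_NV[OF j] neq by simp
  also have "\<dots> = F ?d1 * K ?d1 ?e + F ?d2 * K ?d2 ?e"
    using mat_add_self[OF c1 c2] .
  finally show ?thesis .
qed

lemma F_W: "N \<in> swirl_receiver_sets w \<Longrightarrow> (j, b) \<in> N \<Longrightarrow>
   F (NW j b, NR N) = F (NV j, NW j b) * K (NV j, NW j b) (NW j b, NR N)"
proof -
  assume N: "N \<in> swirl_receiver_sets w" and jb: "(j, b) \<in> N"
  have j: "j < w" using rs_sub[OF N jb] .
  have "F (NW j b, NR N) = mat n L (\<lambda>(i,j'). (F (NV j, NW j b) * K (NV j, NW j b) (NW j b, NR N)) $$ (i,j'))"
    using rec E_WR[OF N jb] in_NW[OF j] by simp
  also have "\<dots> = F (NV j, NW j b) * K (NV j, NW j b) (NW j b, NR N)"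
    using Fc Kc E_VW[OF j] E_WR[OF N jb] by (intro mat_self mult_carrier_mat) blast+
  finally show ?thesis .
qed

definition Amat :: "nat \<Rightarrow> bool \<Rightarrow> 'c mat" where
  "Amat j b = K (Src, NU j) (NU j, NV j) * K (NU j, NV j) (NV j, NW j b)"
definition Cmat :: "nat \<Rightarrow> bool \<Rightarrow> 'c mat" where
  "Cmat j b = K (Src, NU (Suc j mod w)) (NU (Suc j mod w), NV j) * K (NU (Suc j mod w), NV j) (NV j, NW j b)"

lemma AC_carrier: "j < w \<Longrightarrow> Amat j b \<in> carrier_mat L L \<and> Cmat j b \<in> carrier_mat L L"
proof -
  assume j: "j < w"
  have "Suc j mod w < w" using j by simp
  then show ?thesis unfolding Amat_def Cmat_def
    using Kc EU[OF j] EU E_UV1[OF j] E_UV2[OF j] E_VW[OF j] by (meson mult_carrier_mat)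
qed

lemma bk_carrier: "bk L \<phi> p \<in> carrier_vec L" by (simp add: bk_def)

lemma rv_U: "a < w \<Longrightarrow> (NU a, NV j) \<in> E \<Longrightarrow> \<phi> \<in> carrier_vec n \<Longrightarrow> M \<in> carrier_mat L L \<Longrightarrow>
   rv \<phi> (F (NU a, NV j) * M) = rv (bk L \<phi> (pos a)) (K (Src, NU a) (NU a, NV j) * M)"
proof -
  assume a: "a < w" and e: "(NU a, NV j) \<in> E" and \<phi>: "\<phi> \<in> carrier_vec n" and M: "M \<in> carrier_mat L L"
  have Fs: "F (Src, NU a) \<in> carrier_mat n L" using Fc EU[OF a] by blast
  have K1: "K (Src, NU a) (NU a, NV j) \<in> carrier_mat L L" using Kc EU[OF a] e by blast
  have "rv \<phi> (F (NU a, NV j) * M) = rv \<phi> (F (Src, NU a) * K (Src, NU a) (NU a, NV j) * M)"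
    using F_U[OF a e] by simp
  also have "\<dots> = rv (rv \<phi> (F (Src, NU a))) (K (Src, NU a) (NU a, NV j) * M)"
    using rv_mult[OF Fs _ \<phi>, of "K (Src, NU a) (NU a, NV j) * M" L] K1 M
    by (simp add: assoc_mult_mat[OF Fs K1 M])
  also have "\<dots> = rv (bk L \<phi> (pos a)) (K (Src, NU a) (NU a, NV j) * M)" using rv_src[OF a \<phi>] by simp
  finally show ?thesis .
qed

lemma rv_V: "j < w \<Longrightarrow> \<phi> \<in> carrier_vec n \<Longrightarrow>
   rv \<phi> (F (NV j, NW j b)) = rv (bk L \<phi> (pos j)) (Amat j b) + rv (bk L \<phi> (pos (Suc j mod w))) (Cmat j b)"
proof -
  assume j: "j < w" and \<phi>: "\<phi> \<in> carrier_vec n"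
  have s: "Suc j mod w < w" using j by simp
  let ?d1 = "(NU j, NV j)" and ?d2 = "(NU (Suc j mod w), NV j)" and ?e = "(NV j, NW j b)"
  have K2: "K ?d1 ?e \<in> carrier_mat L L" "K ?d2 ?e \<in> carrier_mat L L"
    using Kc E_UV1[OF j] E_UV2[OF j] E_VW[OF j] by blast+
  have c1: "F ?d1 * K ?d1 ?e \<in> carrier_mat n L" using Fc Kc E_UV1[OF j] E_VW[OF j] by (intro mult_carrier_mat) blast+
  have c2: "F ?d2 * K ?d2 ?e \<in> carrier_mat n L" using Fc Kc E_UV2[OF j] E_VW[OF j] by (intro mult_carrier_mat) blast+
  have "rv \<phi> (F ?e) = rv \<phi> (F ?d1 * K ?d1 ?e) + rv \<phi> (F ?d2 * K ?d2 ?e)"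
    using F_V[OF j] rv_add[OF c1 c2 \<phi>] by simp
  also have "rv \<phi> (F ?d1 * K ?d1 ?e) = rv (bk L \<phi> (pos j)) (Amat j b)"
    unfolding Amat_def using rv_U[OF j E_UV1[OF j] \<phi> K2(1)] .
  also have "rv \<phi> (F ?d2 * K ?d2 ?e) = rv (bk L \<phi> (pos (Suc j mod w))) (Cmat j b)"
    unfolding Cmat_def using rv_U[OF s E_UV2[OF j] \<phi> K2(2)] .
  finally show ?thesis .
qed

lemma rcv_B:
  assumes N: "N \<in> swirl_receiver_sets w" and \<phi>: "\<phi> \<in> carrier_vec n"
    and h: "\<forall>(j,b)\<in>N. rv \<phi> (F (NV j, NW j b)) = 0\<^sub>v L"
  shows "\<phi> = 0\<^sub>v n"
proof -
  obtain es where es: "distinct es" "set es = In_edges E snd (NR N)" "vec_space.rank n (block_concat n F es) = n"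
    using rcv N unfolding swirl_receivers_def by blast
  have len: "length es = w" using distinct_card[OF es(1)] es(2) in_NR_card[OF N] by simp
  have esE: "\<forall>e\<in>set es. e \<in> E" using es(2) unfolding In_edges_def by auto
  have Fes: "\<forall>e\<in>set es. F e \<in> carrier_mat n L" using Fc esE by blast
  have Mc: "block_concat n F es \<in> carrier_mat n n" using bc_carrier[OF Fes] len by (simp add: mult.commute)
  have all: "\<forall>c\<in>set (cols (block_concat n F es)). c \<bullet> \<phi> = 0"
  proof
    fix c assume "c \<in> set (cols (block_concat n F es))"
    then obtain e where e: "e \<in> set es" "c \<in> set (cols (F e))" using bc_cols[OF Fes] by auto
    obtain j b where jb: "(j, b) \<in> N" "e = (NW j b, NR N)" using e(1) es(2) in_NR[OF N] by auto
    have j: "j < w" using rs_sub[OF N jb(1)] .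
    have Fe: "F e \<in> carrier_mat n L" using Fes e(1) by blast
    obtain k where k: "k < L" "c = col (F e) k" using e(2) Fe by (auto simp: in_set_conv_nth)
    have K3: "K (NV j, NW j b) (NW j b, NR N) \<in> carrier_mat L L" using Kc E_VW[OF j] E_WR[OF N jb(1)] by blast
    have FV: "F (NV j, NW j b) \<in> carrier_mat n L" using Fc E_VW[OF j] by blast
    have "rv \<phi> (F e) = rv (rv \<phi> (F (NV j, NW j b))) (K (NV j, NW j b) (NW j b, NR N))"
      using F_W[OF N jb(1)] jb(2) rv_mult[OF FV K3 \<phi>] by simp
    also have "\<dots> = 0\<^sub>v L" using h jb(1) rv_zero[OF K3] by auto
    finally show "c \<bullet> \<phi> = 0" using col_rv[OF Fe \<phi> k(1)] k by simp
  qed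
  show ?thesis using rank_full_iff[OF Mc] es(3) all \<phi> by blast
qed

definition mk :: "(nat \<Rightarrow> 'c vec) \<Rightarrow> 'c vec" where
  "mk g = vec n (\<lambda>i. g (nd (i div L)) $ (i mod L))"

lemma bk_mk: "a < w \<Longrightarrow> g a \<in> carrier_vec L \<Longrightarrow> bk L (mk g) (pos a) = g a"
proof (rule eq_vecI)
  assume a: "a < w" and g: "g a \<in> carrier_vec L"
  show "dim_vec (bk L (mk g) (pos a)) = dim_vec (g a)" using g by (simp add: bk_def)
  fix k assume "k < dim_vec (g a)"
  then have k: "k < L" using g by simp
  have i: "pos a * L + k < n" using idx_lt pos[OF a] k by blast
  have "(pos a * L + k) div L = pos a" "(pos a * L + k) mod L = k" using k by auto
  then show "bk L (mk g) (pos a) $ k = g a $ k" using i k pos[OF a] by (simp add: bk_def mk_def)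
qed

lemma rcv_mk:
  assumes N: "N \<in> swirl_receiver_sets w" and g: "\<forall>a<w. g a \<in> carrier_vec L"
    and h: "\<forall>(j,b)\<in>N. rv (g j) (Amat j b) + rv (g (Suc j mod w)) (Cmat j b) = 0\<^sub>v L"
  shows "\<forall>a<w. g a = 0\<^sub>v L"
proof -
  have mc: "mk g \<in> carrier_vec n" by (simp add: mk_def)
  have "\<forall>(j,b)\<in>N. rv (mk g) (F (NV j, NW j b)) = 0\<^sub>v L"
  proof (intro ballI, clarify)
    fix j b assume jb: "(j, b) \<in> N"
    have j: "j < w" using rs_sub[OF N jb] .
    have s: "Suc j mod w < w" using j by simp
    show "rv (mk g) (F (NV j, NW j b)) = 0\<^sub>v L"
      using rv_V[OF j mc] bk_mk[OF j] bk_mk[OF s] g j s h jb by auto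
  qed
  then have z: "mk g = 0\<^sub>v n" using rcv_B[OF N mc] by blast
  show ?thesis
  proof (intro allI impI)
    fix a assume a: "a < w"
    have "g a = bk L (mk g) (pos a)" using bk_mk[OF a] g a by simp
    also have "\<dots> = 0\<^sub>v L" unfolding z by (intro eq_vecI) (auto simp: bk_def idx_lt pos[OF a])
    finally show "g a = 0\<^sub>v L" .
  qed
qed

end

context swsol begin

definition pr :: "nat \<Rightarrow> nat" where "pr a = (if a = 0 then w - 1 else a - 1)"

lemma zz: "j < w \<Longrightarrow> rv (0\<^sub>v L) (Amat j b) + rv (0\<^sub>v L) (Cmat j b) = 0\<^sub>v L"
proof -
  assume j: "j < w"
  have A: "Amat j b \<in> carrier_mat L L" and C: "Cmat j b \<in> carrier_mat L L" using AC_carrier[OF j] by auto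
  show ?thesis using rv_zero[OF A] rv_zero[OF C] by simp
qed

lemma zc: "0\<^sub>v L \<in> carrier_vec L" by simp

lemma RA:
  assumes j: "j < w" and x: "x \<in> carrier_vec L" and h: "rv x (Amat j b) = 0\<^sub>v L"
  shows "x = 0\<^sub>v L"
proof -
  define p where "p = pr j"
  define t where "t a = (if a = p then pr p else a)" for a
  define bs where "bs a = (if a = j then b else a = p)" for a
  have tt: "\<forall>a<w. t a < w \<and> (t a = a \<or> Suc (t a) mod w = a)"
    using w6 unfolding t_def p_def pr_def by (auto simp: smod)
  have inj: "inj_on (\<lambda>a. (t a, bs a)) {..<w}"
    using w6 j unfolding inj_on_def t_def bs_def p_def pr_def by (auto simp: smod split: if_splits)
  define N where "N = (\<lambda>a. (t a, bs a)) ` {..<w}"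
  have N: "N \<in> swirl_receiver_sets w" unfolding N_def by (rule rs_intro[OF tt inj])
  define g where "g a = (if a = j then x else 0\<^sub>v L)" for a
  have g: "\<forall>a<w. g a \<in> carrier_vec L" using x unfolding g_def by auto
  have "\<forall>(j',b')\<in>N. rv (g j') (Amat j' b') + rv (g (Suc j' mod w)) (Cmat j' b') = 0\<^sub>v L"
  proof (clarify)
    fix j' b' assume "(j', b') \<in> N"
    then obtain a where a: "a < w" "j' = t a" "b' = bs a" unfolding N_def by auto
    have j'w: "j' < w" using tt a by auto
    show "rv (g j') (Amat j' b') + rv (g (Suc j' mod w)) (Cmat j' b') = 0\<^sub>v L"
    proof (cases "j' = j")
      case True
      then have "a = j" "b' = b" using a w6 j unfolding t_def bs_def p_def pr_def by (auto split: if_splits)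
      moreover have "Suc j mod w \<noteq> j" using j w6 by (simp add: smod)
      moreover have "rv (0\<^sub>v L) (Cmat j b) = 0\<^sub>v L" using AC_carrier[OF j] rv_zero by blast
      ultimately show ?thesis using True h unfolding g_def by simp
    next
      case False
      moreover have "Suc j' mod w \<noteq> j" using a w6 j unfolding t_def p_def pr_def by (auto simp: smod split: if_splits)
      ultimately show ?thesis using zz[OF j'w] unfolding g_def by simp
    qed
  qed
  then have "\<forall>a<w. g a = 0\<^sub>v L" using rcv_mk[OF N g] by blast
  then show ?thesis using j unfolding g_def by auto
qed


lemma RC:
  assumes j: "j < w" and y: "y \<in> carrier_vec L" and h: "rv y (Cmat j b) = 0\<^sub>v L"
  shows "y = 0\<^sub>v L"
proof -
  define s where "s = Suc j mod w"
  define t where "t a = (if a = j \<or> a = s then pr a else a)" for a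
  define bs where "bs a = (if a = s then b else a = j)" for a
  have tt: "\<forall>a<w. t a < w \<and> (t a = a \<or> Suc (t a) mod w = a)"
    using w6 j unfolding t_def s_def pr_def by (auto simp: smod)
  have inj: "inj_on (\<lambda>a. (t a, bs a)) {..<w}"
    using w6 j unfolding inj_on_def t_def bs_def s_def pr_def by (auto simp: smod split: if_splits)
  define N where "N = (\<lambda>a. (t a, bs a)) ` {..<w}"
  have N: "N \<in> swirl_receiver_sets w" unfolding N_def by (rule rs_intro[OF tt inj])
  define g where "g a = (if a = s then y else 0\<^sub>v L)" for a
  have g: "\<forall>a<w. g a \<in> carrier_vec L" using y unfolding g_def by auto
  have "\<forall>(j',b')\<in>N. rv (g j') (Amat j' b') + rv (g (Suc j' mod w)) (Cmat j' b') = 0\<^sub>v L"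
  proof (clarify)
    fix j' b' assume "(j', b') \<in> N"
    then obtain a where a: "a < w" "j' = t a" "b' = bs a" unfolding N_def by auto
    have j'w: "j' < w" using tt a by auto
    have ns: "j' \<noteq> s" using a w6 j unfolding t_def s_def pr_def by (auto simp: smod split: if_splits)
    show "rv (g j') (Amat j' b') + rv (g (Suc j' mod w)) (Cmat j' b') = 0\<^sub>v L"
    proof (cases "j' = j")
      case True
      then have "a = s" "b' = b" using a w6 j unfolding t_def bs_def s_def pr_def by (auto simp: smod split: if_splits)
      moreover have "rv (0\<^sub>v L) (Amat j b) = 0\<^sub>v L" using AC_carrier[OF j] rv_zero by blast
      ultimately show ?thesis using True h ns y unfolding g_def s_def by simp
    next
      case False
      moreover have "Suc j' mod w \<noteq> s" using False j'w j unfolding s_def by (auto simp: smod split: if_splits)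
      ultimately show ?thesis using zz[OF j'w] ns unfolding g_def by simp
    qed
  qed
  then have "\<forall>a<w. g a = 0\<^sub>v L" using rcv_mk[OF N g] by blast
  moreover have "s < w" using j unfolding s_def by simp
  ultimately show ?thesis unfolding g_def by auto
qed

lemma R2:
  assumes j: "j < w" and x: "x \<in> carrier_vec L" and y: "y \<in> carrier_vec L"
    and h1: "rv x (Amat j True) + rv y (Cmat j True) = 0\<^sub>v L"
    and h2: "rv x (Amat j False) + rv y (Cmat j False) = 0\<^sub>v L"
  shows "x = 0\<^sub>v L"
proof -
  define p where "p = pr j"
  define s where "s = Suc j mod w"
  have pw: "p < w" and sw: "s < w" and pp: "pr p < w" using j w6 unfolding p_def s_def pr_def by auto
  have f1: "pr s = j" using j w6 unfolding s_def pr_def by (auto simp: smod)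
  have f2: "pr p \<noteq> s" "pr p \<noteq> j" "pr p \<noteq> p" using j w6 unfolding p_def s_def pr_def by (auto simp: smod)
  have f3: "j \<noteq> s" "j \<noteq> p" "p \<noteq> s" using j w6 unfolding p_def s_def pr_def by (auto simp: smod)
  have f4: "Suc p mod w = j" "Suc (pr p) mod w = p" "Suc j mod w = s" using j w6 unfolding p_def s_def pr_def by (auto simp: smod)
  define t where "t a = (if a = p \<or> a = s then pr a else a)" for a
  define bs where "bs a = (a = p \<or> a = s)" for a
  have tt: "\<forall>a<w. t a < w \<and> (t a = a \<or> Suc (t a) mod w = a)"
  proof (intro allI impI)
    fix a assume a: "a < w"
    show "t a < w \<and> (t a = a \<or> Suc (t a) mod w = a)"
      using a j pw sw pp f1 f4 unfolding t_def by auto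
  qed
  have inj: "inj_on (\<lambda>a. (t a, bs a)) {..<w}"
  proof (rule inj_onI)
    fix a a' assume a: "a \<in> {..<w}" "a' \<in> {..<w}" "(t a, bs a) = (t a', bs a')"
    then show "a = a'" using f1 f2 f3 unfolding t_def bs_def by (auto split: if_splits)
  qed
  define N where "N = (\<lambda>a. (t a, bs a)) ` {..<w}"
  have N: "N \<in> swirl_receiver_sets w" unfolding N_def by (rule rs_intro[OF tt inj])
  define g where "g a = (if a = j then x else if a = s then y else 0\<^sub>v L)" for a
  have g: "\<forall>a<w. g a \<in> carrier_vec L" using x y unfolding g_def by auto
  have "\<forall>(j',b')\<in>N. rv (g j') (Amat j' b') + rv (g (Suc j' mod w)) (Cmat j' b') = 0\<^sub>v L"
  proof (clarify)
    fix j' b' assume "(j', b') \<in> N"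
    then obtain a where a: "a < w" "j' = t a" "b' = bs a" unfolding N_def by auto
    have j'w: "j' < w" using tt a by auto
    have ns: "j' \<noteq> s" using a f1 f2 f3 unfolding t_def by auto
    have np: "j' \<noteq> p" using a f1 f2 f3 unfolding t_def by auto
    show "rv (g j') (Amat j' b') + rv (g (Suc j' mod w)) (Cmat j' b') = 0\<^sub>v L"
    proof (cases "j' = j")
      case True
      then show ?thesis using h1 h2 f3 f4 unfolding g_def by (cases b') auto
    next
      case False
      have "Suc j' mod w \<noteq> s" using False modsuc_inj[OF j'w j] f4 by auto
      moreover have "Suc j' mod w \<noteq> j" using np modsuc_inj[OF j'w pw] f4 by auto
      ultimately show ?thesis using zz[OF j'w] ns False unfolding g_def by simp
    qed
  qed
  then have "\<forall>a<w. g a = 0\<^sub>v L" using rcv_mk[OF N g] by blast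
  then show ?thesis using j unfolding g_def by auto
qed

lemma Rall:
  assumes xs: "\<forall>a<w. xs a \<in> carrier_vec L"
    and h: "\<forall>j<w. rv (xs j) (Amat j (bs j)) + rv (xs (Suc j mod w)) (Cmat j (bs j)) = 0\<^sub>v L"
  shows "\<forall>a<w. xs a = 0\<^sub>v L"
proof -
  define N where "N = (\<lambda>a. (a, bs a)) ` {..<w}"
  have N: "N \<in> swirl_receiver_sets w" unfolding N_def
    by (rule rs_intro[where t = "\<lambda>a. a"]) (auto simp: inj_on_def)
  show ?thesis using rcv_mk[OF N xs] h unfolding N_def by auto
qed

end

lemma partB_core:
  fixes K :: "snode\<times>snode \<Rightarrow> snode\<times>snode \<Rightarrow> 'c::{field,finite} mat"
  assumes S: "swsol w L K F srcs" and c2: "(1::'c) + 1 = 0" and card2: "card (UNIV::'c set) = 2" and L3: "L \<le> 3"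
  shows False
proof -
  interpret swsol w L K F srcs by (rule S)
  have Dex: "\<exists>D. D \<in> carrier_mat L L \<and> D * Cmat j b = 1\<^sub>m L" if j: "j < w" for j b
  proof -
    have C: "Cmat j b \<in> carrier_mat L L" using AC_carrier[OF j] by blast
    have "det (transpose_mat (Cmat j b)) \<noteq> 0"
    proof
      assume "det (transpose_mat (Cmat j b)) = 0"
      then obtain v where v: "v \<in> carrier_vec L" "v \<noteq> 0\<^sub>v L" "transpose_mat (Cmat j b) *\<^sub>v v = 0\<^sub>v L"
        using det_0_iff_vec_prod_zero_field[of "transpose_mat (Cmat j b)" L] C by auto
      have "rv v (Cmat j b) = 0\<^sub>v L" using v(3) unfolding rv_def .
      then show False using RC[OF j v(1)] v(2) by blast
    qed
    then have "det (Cmat j b) \<noteq> 0" using det_transpose[OF C] by simp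
    from det_non_zero_imp_unit[OF C this, of "()"]
    show ?thesis unfolding Units_def ring_mat_def by auto
  qed
  define Dm where "Dm j b = (SOME D. D \<in> carrier_mat L L \<and> D * Cmat j b = 1\<^sub>m L)" for j b
  have Dm: "Dm j b \<in> carrier_mat L L \<and> Dm j b * Cmat j b = 1\<^sub>m L" if "j < w" for j b
    unfolding Dm_def using someI_ex[OF Dex[OF that]] .
  define f where "f j b x = rv x (Amat j b * Dm j b)" for j b x
  have fc: "f j b x \<in> carrier_vec L" if "j < w" for j b x
    unfolding f_def using AC_carrier[OF that] Dm[OF that] by (meson mult_carrier_mat rv_carrier)
  have key: "rv (f j b x) (Cmat j b) = rv x (Amat j b)" if j: "j < w" and x: "x \<in> carrier_vec L" for j b x
  proof -
    have A: "Amat j b \<in> carrier_mat L L" and C: "Cmat j b \<in> carrier_mat L L" using AC_carrier[OF j] by auto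
    have D: "Dm j b \<in> carrier_mat L L" and DC: "Dm j b * Cmat j b = 1\<^sub>m L" using Dm[OF j] by auto
    have AD: "Amat j b * Dm j b \<in> carrier_mat L L" using A D by simp
    have "rv (f j b x) (Cmat j b) = rv x (Amat j b * Dm j b * Cmat j b)"
      unfolding f_def using rv_mult[OF AD C x] by simp
    also have "Amat j b * Dm j b * Cmat j b = Amat j b" using assoc_mult_mat[OF A D C] DC A by simp
    finally show ?thesis .
  qed
  have gp: "\<forall>j<w. goodpair L (f j True) (f j False)"
  proof (intro allI impI)
    fix j assume j: "j < w"
    have A: "\<And>b. Amat j b \<in> carrier_mat L L" and C: "\<And>b. Cmat j b \<in> carrier_mat L L" using AC_carrier[OF j] by auto
    have AD: "\<And>b. Amat j b * Dm j b \<in> carrier_mat L L" using A Dm[OF j] by (meson mult_carrier_mat)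
    have add: "\<And>b x y. x \<in> carrier_vec L \<Longrightarrow> y \<in> carrier_vec L \<Longrightarrow> f j b (x + y) = f j b x + f j b y"
      unfolding f_def using rv_vadd[OF AD] by blast
    have zero: "\<And>b x. x \<in> carrier_vec L \<Longrightarrow> f j b x = 0\<^sub>v L \<Longrightarrow> x = 0\<^sub>v L"
    proof -
      fix b x assume x: "x \<in> carrier_vec L" and z: "f j b x = 0\<^sub>v L"
      have "rv x (Amat j b) = rv (f j b x) (Cmat j b)" using key[OF j x] by simp
      also have "\<dots> = 0\<^sub>v L" using z rv_zero[OF C] by simp
      finally show "x = 0\<^sub>v L" using RA[OF j x] by blast
    qed
    have dist: "\<And>x. x \<in> carrier_vec L \<Longrightarrow> x \<noteq> 0\<^sub>v L \<Longrightarrow> f j True x \<noteq> f j False x"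
    proof
      fix x assume x: "x \<in> carrier_vec L" and nz: "x \<noteq> 0\<^sub>v L" and e: "f j True x = f j False x"
      define y where "y = f j True x"
      have y: "y \<in> carrier_vec L" unfolding y_def using fc[OF j] .
      have "rv y (Cmat j b) = rv x (Amat j b)" for b
        using key[OF j x, of b] e unfolding y_def by (cases b) auto
      then have "rv x (Amat j b) + rv y (Cmat j b) = 0\<^sub>v L" for b
        using v2[OF c2 rv_carrier[OF A[of b]]] by simp
      then show False using R2[OF j x y] nz by blast
    qed
    show "goodpair L (f j True) (f j False)"
      unfolding goodpair_def using fc[OF j] add zero dist by blast
  qed
  obtain xs bs where ws: "xs 0 \<in> Zs L" "\<forall>j<w. xs (Suc j) = f j (bs j) (xs j)" "xs w = xs 0"
    using walk[OF c2 card2 L1 L3 gp w6] by blast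
  have x0: "xs 0 \<in> carrier_vec L" "xs 0 \<noteq> 0\<^sub>v L"
    using Zc[OF c2 card2 L1 L3 ws(1)] Znz[OF c2 card2 L1 L3 ws(1)] by auto
  have xsc: "j \<le> w \<Longrightarrow> xs j \<in> carrier_vec L" for j
  proof (induction j)
    case 0 then show ?case using x0 by simp
  next
    case (Suc j) then show ?case using ws(2) fc by simp
  qed
  have "\<forall>j<w. rv (xs j) (Amat j (bs j)) + rv (xs (Suc j mod w)) (Cmat j (bs j)) = 0\<^sub>v L"
  proof (intro allI impI)
    fix j assume j: "j < w"
    have xj: "xs j \<in> carrier_vec L" using xsc j by simp
    have "xs (Suc j mod w) = xs (Suc j)" using j ws(3) by (simp add: smod)
    also have "\<dots> = f j (bs j) (xs j)" using ws(2) j by simp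
    finally have "rv (xs (Suc j mod w)) (Cmat j (bs j)) = rv (xs j) (Amat j (bs j))" using key[OF j xj] by simp
    then show "rv (xs j) (Amat j (bs j)) + rv (xs (Suc j mod w)) (Cmat j (bs j)) = 0\<^sub>v L"
      using v2[OF c2 rv_carrier[OF conjunct1[OF AC_carrier[OF j]]]] by simp
  qed
  then have "\<forall>a<w. xs a = 0\<^sub>v L" using Rall xsc by simp
  then show False using x0 w6 by auto
qed

lemma char_eq:
  assumes "card (UNIV :: 'a::{field,finite} set) = p" "prime p" shows "CHAR('a) = p"
proof -
  have "CHAR('a) dvd p" using CHAR_dvd_CARD[where 'a='a] assms(1) by simp
  then show ?thesis using assms(2) CHAR_not_1'[where 'a='a] by (auto simp: prime_nat_iff)
qed

lemma ofnat_ne0: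
  assumes "CHAR('a::field) = p" "\<not> p dvd k" shows "(of_nat k :: 'a) \<noteq> 0"
  using of_nat_eq_0_iff_char_dvd[of k, where 'a='a] assms by simp

theorem proposition13:
  fixes \<omega> :: nat
  assumes "\<omega> \<ge> 6"
    and "card (UNIV :: 'a::{field,finite} set) = 5"
    and "card (UNIV :: 'b::{field,finite} set) = 7"
    and "card (UNIV :: 'c::{field,finite} set) = 2"
  shows "swirl_vl_solvable TYPE('a) \<omega> 1 \<and> swirl_vl_solvable TYPE('b) \<omega> 1 \<and>
         (\<forall>L\<in>{1, 2, 3}. \<not> swirl_vl_solvable TYPE('c) \<omega> L)"
proof (intro conjI)
  have p5: "prime (5::nat)" by (simp add: prime_nat_iff' atLeastLessThan_nat_numeral)
  have p7: "prime (7::nat)" by (simp add: prime_nat_iff' atLeastLessThan_nat_numeral)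
  have p2: "prime (2::nat)" by simp
  have ca: "CHAR('a) = 5" using char_eq[OF assms(2) p5] .
  have cb: "CHAR('b) = 7" using char_eq[OF assms(3) p7] .
  have cc: "CHAR('c) = 2" using char_eq[OF assms(4) p2] .
  have a2: "(2::'a) \<noteq> 0" using ofnat_ne0[OF ca, of 2] by simp
  have a3: "(3::'a) \<noteq> 0" using ofnat_ne0[OF ca, of 3] by simp
  have b2: "(2::'b) \<noteq> 0" using ofnat_ne0[OF cb, of 2] by simp
  have b3: "(3::'b) \<noteq> 0" using ofnat_ne0[OF cb, of 3] by simp
  show "swirl_vl_solvable TYPE('a) \<omega> 1" using partA[OF assms(1) a2 a3] .
  show "swirl_vl_solvable TYPE('b) \<omega> 1" using partA[OF assms(1) b2 b3] .
  have c2: "(1::'c) + 1 = 0"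
  proof -
    have "(of_nat 2 :: 'c) = 0" using of_nat_eq_0_iff_char_dvd[of 2, where 'a='c] cc by simp
    then show ?thesis by simp
  qed
  show "\<forall>L\<in>{1, 2, 3}. \<not> swirl_vl_solvable TYPE('c) \<omega> L"
  proof (intro ballI notI)
    fix L :: nat assume L: "L \<in> {1, 2, 3}" and sol: "swirl_vl_solvable TYPE('c) \<omega> L"
    obtain K :: "snode\<times>snode \<Rightarrow> snode\<times>snode \<Rightarrow> 'c mat" and F
      where S: "is_vector_linear_solution (swirl_edges \<omega>) fst snd Src (swirl_receivers \<omega>) L K F"
      using sol unfolding swirl_vl_solvable_def vector_linear_solvable_def by blast
    note S' = S[unfolded is_vector_linear_solution_def Let_def out_src_card]
    obtain srcs where srcs: "distinct srcs" "set srcs = Out_edges (swirl_edges \<omega>) fst Src"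
        "block_concat (\<omega> * L) F srcs = 1\<^sub>m (\<omega> * L)"
      using S' by blast
    have L3: "L \<le> 3" using L by auto
    have sw: "swsol \<omega> L K F srcs"
    proof (unfold_locales)
      show "\<omega> \<ge> 6" using assms(1) .
      show "L \<ge> 1" using L by auto
    qed (use S' srcs in blast)+
    show False using partB_core[OF sw c2 assms(4) L3] .
  qed
qed

end
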